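(* Let $\Omega\subset\mathbb{R}^3$ be a domain on which integrations by parts produce no boundary terms (e.g. a periodic domain), let $\mu\ge 0$ be the viscosity, and let $e(\rho,s)$ be a smooth internal energy function of the mass density $\rho$ and the entropy density $s$. Consider the Lagrangian $$l(\boldsymbol{u},\rho,s,\boldsymbol{B})=\int_\Omega \frac{\rho|\boldsymbol{u}|^2}{2}-\rho\, e(\rho,s)-\frac{|\boldsymbol{B}|^2}{2}$$ and the action $S(\boldsymbol{u},\rho,s,\boldsymbol{B})=\int_0^{T_f} l(\boldsymbol{u}(t),\rho(t),s(t),\boldsymbol{B}(t))\,dt$. Call a curve $(\boldsymbol{u},\rho,s,\boldsymbol{B})$ extremal if $\delta S=0$ for all constrained variations of the following form: for every time-dependent vector field $\boldsymbol{v}$ with $\boldsymbol{v}(0)=\boldsymbol{v}(T_f)=0$, $$\delta\boldsymbol{u}=\partial_t\boldsymbol{v}+[\boldsymbol{u},\boldsymbol{v}],\qquad \delta\rho=-\nabla\cdot(\rho\boldsymbol{v}),\qquad \frac{\delta l}{\delta s}\big(\delta s+\nabla\cdot(s\boldsymbol{v})\big)=-\mu\,\nabla\boldsymbol{u}:\nabla\boldsymbol{v},\qquad \delta\boldsymbol{B}=-\nabla\times(\boldsymbol{B}\times\boldsymbol{v}),$$ where $[\boldsymbol{u},\boldsymbol{v}]=\boldsymbol{u}\cdot\nabla\boldsymbol{v}-\boldsymbol{v}\cdot\nabla\boldsymbol{u}$. Then, for curves whose density satisfies $\partial_t\rho+\nabla\cdot(\rho\boldsymbol{u})=0$, the curve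 is extremal if and only if it satisfies the viscous–resistive MHD momentum equation $$\rho\partial_t\boldsymbol{u}+\rho(\boldsymbol{u}\cdot\nabla\boldsymbol{u})+\nabla p+\boldsymbol{B}\times\nabla\times\boldsymbol{B}=\nabla\cdot(\mu\nabla\boldsymbol{u}),\qquad p=\rho\big(\rho\,\partial_\rho e+s\,\partial_s e\big).$$
   Context: $\frac{\delta l}{\delta s}$ denotes the $L^2$ functional derivative of $l$ with respect to $s$, namely $-\rho\,\partial_s e(\rho,s)$ (assumed nonvanishing, so that the constraint determines $\delta s$); $\nabla\boldsymbol{u}:\nabla\boldsymbol{v}$ is the Frobenius contraction. The paper supplements this principle with the equations $\partial_t\rho=-\nabla\cdot(\rho\boldsymbol{u})$, $\frac{\delta l}{\delta s}(\partial_t s+\nabla\cdot(s\boldsymbol{u}))=-\mu|\nabla\boldsymbol{u}|^2-\eta|\nabla\times\boldsymbol{B}|^2$, $\partial_t\boldsymbol{B}=-\nabla\times(\boldsymbol{B}\times\boldsymbol{u})-\nabla\times(\eta\nabla\times\boldsymbol{B})$ (with resistivity $\eta$ and temperature $T=-\frac{\delta l}{\delta s}$) to obtain the full viscous–resistive MHD system. *)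

theory Defs
  imports "HOL-Analysis.Analysis" "HOL-Analysis.Cross3"
begin

(* Space: R^3 with unit-periodic fields (the 3-torus, a domain without boundary terms).
   Time-dependent fields are functions of t :: real and x :: real^3. *)

type_synonym sfield = "real \<Rightarrow> real^3 \<Rightarrow> real"
type_synonym vfield = "real \<Rightarrow> real^3 \<Rightarrow> real^3"

coinductive smooth_fn :: "('a::euclidean_space \<Rightarrow> real) \<Rightarrow> bool" where
  "\<lbrakk>\<forall>x. f differentiable (at x);
    \<forall>b\<in>Basis. smooth_fn (\<lambda>x. frechet_derivative f (at x) b)\<rbrakk> \<Longrightarrow> smooth_fn f"

definition smooth_sf :: "sfield \<Rightarrow> bool" where
  "smooth_sf f \<longleftrightarrow> smooth_fn (\<lambda>p::real \<times> (real^3). f (fst p) (snd p))"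

definition smooth_vf :: "vfield \<Rightarrow> bool" where
  "smooth_vf w \<longleftrightarrow> (\<forall>i. smooth_fn (\<lambda>p::real \<times> (real^3). w (fst p) (snd p) $ i))"

definition periodic3 :: "(real^3 \<Rightarrow> 'b) \<Rightarrow> bool" where
  "periodic3 g \<longleftrightarrow> (\<forall>x j. g (x + axis j 1) = g x)"

definition pdx :: "3 \<Rightarrow> (real^3 \<Rightarrow> real) \<Rightarrow> real^3 \<Rightarrow> real" where
  "pdx j g x = deriv (\<lambda>h. g (x + h *\<^sub>R axis j 1)) 0"

definition sdt :: "sfield \<Rightarrow> sfield" where
  "sdt f t x = deriv (\<lambda>\<tau>. f \<tau> x) t"

definition vdt :: "vfield \<Rightarrow> vfield" where
  "vdt w t x = (\<chi> i. deriv (\<lambda>\<tau>. w \<tau> x $ i) t)"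

definition grad :: "(real^3 \<Rightarrow> real) \<Rightarrow> real^3 \<Rightarrow> real^3" where
  "grad g x = (\<chi> j. pdx j g x)"

definition dvg :: "(real^3 \<Rightarrow> real^3) \<Rightarrow> real^3 \<Rightarrow> real" where
  "dvg w x = (\<Sum>j\<in>UNIV. pdx j (\<lambda>y. w y $ j) x)"

definition curl :: "(real^3 \<Rightarrow> real^3) \<Rightarrow> real^3 \<Rightarrow> real^3" where
  "curl w x = (\<chi> i.
     if i = 1 then pdx 2 (\<lambda>y. w y $ 3) x - pdx 3 (\<lambda>y. w y $ 2) x
     else if i = 2 then pdx 3 (\<lambda>y. w y $ 1) x - pdx 1 (\<lambda>y. w y $ 3) x
     else pdx 1 (\<lambda>y. w y $ 2) x - pdx 2 (\<lambda>y. w y $ 1) x)"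

definition adv :: "(real^3 \<Rightarrow> real^3) \<Rightarrow> (real^3 \<Rightarrow> real^3) \<Rightarrow> real^3 \<Rightarrow> real^3" where
  "adv w z x = (\<chi> i. \<Sum>j\<in>UNIV. w x $ j * pdx j (\<lambda>y. z y $ i) x)"

definition lie :: "(real^3 \<Rightarrow> real^3) \<Rightarrow> (real^3 \<Rightarrow> real^3) \<Rightarrow> real^3 \<Rightarrow> real^3" where
  "lie u v x = adv u v x - adv v u x"

definition frob :: "(real^3 \<Rightarrow> real^3) \<Rightarrow> (real^3 \<Rightarrow> real^3) \<Rightarrow> real^3 \<Rightarrow> real" where
  "frob u v x = (\<Sum>i\<in>UNIV. \<Sum>j\<in>UNIV. pdx j (\<lambda>y. u y $ i) x * pdx j (\<lambda>y. v y $ i) x)"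

definition visc :: "real \<Rightarrow> (real^3 \<Rightarrow> real^3) \<Rightarrow> real^3 \<Rightarrow> real^3" where
  "visc \<mu> u x = (\<chi> i. \<Sum>j\<in>UNIV. pdx j (\<lambda>y. \<mu> * pdx j (\<lambda>z. u z $ i) y) x)"

definition d_rho :: "(real \<Rightarrow> real \<Rightarrow> real) \<Rightarrow> real \<Rightarrow> real \<Rightarrow> real" where
  "d_rho e r s = deriv (\<lambda>r'. e r' s) r"

definition d_s :: "(real \<Rightarrow> real \<Rightarrow> real) \<Rightarrow> real \<Rightarrow> real \<Rightarrow> real" where
  "d_s e r s = deriv (\<lambda>s'. e r s') s"

definition cell :: "(real^3) set" where
  "cell = cbox 0 (\<chi> i. 1)"

definition lag :: "(real \<Rightarrow> real \<Rightarrow> real) \<Rightarrow> (real^3 \<Rightarrow> real^3) \<Rightarrow> (real^3 \<Rightarrow> real)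
                   \<Rightarrow> (real^3 \<Rightarrow> real) \<Rightarrow> (real^3 \<Rightarrow> real^3) \<Rightarrow> real" where
  "lag e u \<rho> s B = integral cell
     (\<lambda>x. \<rho> x * (norm (u x))\<^sup>2 / 2 - \<rho> x * e (\<rho> x) (s x) - (norm (B x))\<^sup>2 / 2)"

definition action :: "(real \<Rightarrow> real \<Rightarrow> real) \<Rightarrow> real \<Rightarrow> vfield \<Rightarrow> sfield \<Rightarrow> sfield \<Rightarrow> vfield \<Rightarrow> real" where
  "action e Tf u \<rho> s B = integral {0..Tf} (\<lambda>t. lag e (u t) (\<rho> t) (s t) (B t))"

definition dl_ds :: "(real \<Rightarrow> real \<Rightarrow> real) \<Rightarrow> real \<Rightarrow> real \<Rightarrow> real" where
  "dl_ds e r s = - r * d_s e r s"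

(* extremality: delta S = 0 (first variation along the straight-line variation
   (u + eps du, rho + eps drho, s + eps ds, B + eps dB)) for all constrained variations *)
definition extremal :: "(real \<Rightarrow> real \<Rightarrow> real) \<Rightarrow> real \<Rightarrow> real \<Rightarrow> vfield \<Rightarrow> sfield \<Rightarrow> sfield \<Rightarrow> vfield \<Rightarrow> bool" where
  "extremal e \<mu> Tf u \<rho> s B \<longleftrightarrow>
    (\<forall>(v::vfield) (\<delta>s::sfield).
       smooth_vf v \<and> (\<forall>t. periodic3 (v t)) \<and> (\<forall>x. v 0 x = 0 \<and> v Tf x = 0) \<and>
       (\<forall>t\<in>{0..Tf}. \<forall>x. dl_ds e (\<rho> t x) (s t x) * (\<delta>s t x + dvg (\<lambda>y. s t y *\<^sub>R v t y) x)
                          = - \<mu> * frob (u t) (v t) x)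
       \<longrightarrow>
       (let \<delta>u = (\<lambda>t x. vdt v t x + lie (u t) (v t) x);
            \<delta>\<rho> = (\<lambda>t x. - dvg (\<lambda>y. \<rho> t y *\<^sub>R v t y) x);
            \<delta>B = (\<lambda>t x. - curl (\<lambda>y. cross3 (B t y) (v t y)) x)
        in ((\<lambda>\<epsilon>. action e Tf (\<lambda>t x. u t x + \<epsilon> *\<^sub>R \<delta>u t x) (\<lambda>t x. \<rho> t x + \<epsilon> * \<delta>\<rho> t x)
                                (\<lambda>t x. s t x + \<epsilon> * \<delta>s t x) (\<lambda>t x. B t x + \<epsilon> *\<^sub>R \<delta>B t x))
            has_real_derivative 0) (at 0)))"

definition pressure :: "(real \<Rightarrow> real \<Rightarrow> real) \<Rightarrow> sfield \<Rightarrow> sfield \<Rightarrow> sfield" where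
  "pressure e \<rho> s t x = \<rho> t x * (\<rho> t x * d_rho e (\<rho> t x) (s t x) + s t x * d_s e (\<rho> t x) (s t x))"

end

theory Submission
  imports Defs "HOL-Computational_Algebra.Polynomial"
begin


definition pd :: "('a::euclidean_space \<Rightarrow> real) \<Rightarrow> 'a \<Rightarrow> 'a \<Rightarrow> real" where
  "pd f b x = frechet_derivative f (at x) b"

fun Ck :: "nat \<Rightarrow> ('a::euclidean_space \<Rightarrow> real) \<Rightarrow> bool" where
  "Ck 0 f = (\<forall>x. f differentiable (at x))"
| "Ck (Suc n) f = ((\<forall>x. f differentiable (at x)) \<and> (\<forall>b\<in>Basis. Ck n (pd f b)))"

lemma Ck_diff: "Ck n f \<Longrightarrow> f differentiable (at x)"
  by (cases n) auto

lemma Ck_Suc_mono: "Ck (Suc n) f \<Longrightarrow> Ck n f"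
  by (induction n arbitrary: f) auto


lemma smooth_imp_Ck: "smooth_fn f \<Longrightarrow> Ck n f"
proof (induction n arbitrary: f)
  case 0 then show ?case by (auto elim: smooth_fn.cases)
next
  case (Suc n) then show ?case by (auto elim!: smooth_fn.cases simp: pd_def[abs_def])
qed

lemma Ck_imp_smooth: "(\<forall>n. Ck n f) \<Longrightarrow> smooth_fn f"
proof (coinduction arbitrary: f rule: smooth_fn.coinduct)
  case (smooth_fn f)
  have "\<forall>x. f differentiable at x" using smooth_fn[rule_format, of 0] by simp
  moreover have "\<forall>b\<in>Basis. \<forall>n. Ck n (pd f b)"
    using smooth_fn by (metis Ck.simps(2))
  ultimately show ?case by (auto simp: pd_def[abs_def])
qed

lemma smooth_iff_Ck: "smooth_fn f \<longleftrightarrow> (\<forall>n. Ck n f)"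
  using smooth_imp_Ck Ck_imp_smooth by blast

lemma smooth_diff: "smooth_fn f \<Longrightarrow> f differentiable (at x)"
  by (auto elim: smooth_fn.cases)

lemma smooth_pd: "smooth_fn f \<Longrightarrow> b \<in> Basis \<Longrightarrow> smooth_fn (pd f b)"
  by (auto elim!: smooth_fn.cases simp: pd_def[abs_def])

lemma smooth_cont: "smooth_fn f \<Longrightarrow> continuous_on S f"
  by (meson continuous_at_imp_continuous_on differentiable_imp_continuous_within smooth_diff)

lemma smooth_contat: "smooth_fn f \<Longrightarrow> isCont f x"
  by (simp add: differentiable_imp_continuous_within smooth_diff)

lemma pd_eq: "(f has_derivative F) (at x) \<Longrightarrow> pd f b x = F b"
  unfolding pd_def using frechet_derivative_at by metis

lemma pd_works: "f differentiable (at x) \<Longrightarrow> (f has_derivative (\<lambda>h. \<Sum>b\<in>Basis. (h \<bullet> b) * pd f b x)) (at x)"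
proof -
  assume "f differentiable (at x)"
  then have d: "(f has_derivative frechet_derivative f (at x)) (at x)"
    using frechet_derivative_works by blast
  then have lin: "linear (frechet_derivative f (at x))"
    using has_derivative_linear by blast
  have "frechet_derivative f (at x) = (\<lambda>h. \<Sum>b\<in>Basis. (h \<bullet> b) * pd f b x)"
  proof
    fix h
    have "frechet_derivative f (at x) h = frechet_derivative f (at x) (\<Sum>b\<in>Basis. (h \<bullet> b) *\<^sub>R b)"
      by (simp add: euclidean_representation)
    also have "\<dots> = (\<Sum>b\<in>Basis. (h \<bullet> b) * pd f b x)"
      using lin by (simp add: linear_sum linear_scale pd_def)
    finally show "frechet_derivative f (at x) h = (\<Sum>b\<in>Basis. (h \<bullet> b) * pd f b x)" .
  qed
  then show ?thesis using d by simp
qed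

lemma pd_linear: "f differentiable (at x) \<Longrightarrow> pd f h x = (\<Sum>b\<in>Basis. (h \<bullet> b) * pd f b x)"
  using pd_eq pd_works by blast

lemma Ck_const: "Ck n (\<lambda>x. c)"
proof (induction n arbitrary: c)
  case 0 then show ?case by simp
next
  case (Suc n)
  have "pd (\<lambda>x. c) b = (\<lambda>x. 0)" for b :: 'a
    by (rule ext, rule pd_eq) (rule has_derivative_const)
  then show ?case using Suc by simp
qed

lemma Ck_add: "Ck n f \<Longrightarrow> Ck n g \<Longrightarrow> Ck n (\<lambda>x. f x + g x)"
proof (induction n arbitrary: f g)
  case 0 then show ?case by auto
next
  case (Suc n)
  have "pd (\<lambda>x. f x + g x) b = (\<lambda>x. pd f b x + pd g b x)" for b
  proof
    fix x
    have "(f has_derivative frechet_derivative f (at x)) (at x)" "(g has_derivative frechet_derivative g (at x)) (at x)"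
      using Suc.prems by (auto simp: frechet_derivative_works[symmetric] Ck_diff)
    then show "pd (\<lambda>x. f x + g x) b x = pd f b x + pd g b x"
      by (subst pd_eq[OF has_derivative_add]) (auto simp: pd_def)
  qed
  then show ?case using Suc by auto
qed

lemma Ck_mult: "Ck n f \<Longrightarrow> Ck n g \<Longrightarrow> Ck n (\<lambda>x. f x * g x)"
proof (induction n arbitrary: f g)
  case 0 then show ?case by auto
next
  case (Suc n)
  have "pd (\<lambda>x. f x * g x) b = (\<lambda>x. f x * pd g b x + pd f b x * g x)" for b
  proof
    fix x
    have "(f has_derivative frechet_derivative f (at x)) (at x)" "(g has_derivative frechet_derivative g (at x)) (at x)"
      using Suc.prems by (auto simp: frechet_derivative_works[symmetric] Ck_diff)
    then show "pd (\<lambda>x. f x * g x) b x = f x * pd g b x + pd f b x * g x"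
      by (subst pd_eq[OF has_derivative_mult]) (auto simp: pd_def)
  qed
  moreover have "Ck n f" "Ck n g" using Suc.prems Ck_Suc_mono by blast+
  ultimately show ?case using Suc by (auto intro!: Ck_add)
qed

lemma Ck_sum: "finite S \<Longrightarrow> (\<And>i. i \<in> S \<Longrightarrow> Ck n (f i)) \<Longrightarrow> Ck n (\<lambda>x. \<Sum>i\<in>S. f i x)"
  by (induction S rule: finite_induct) (auto intro: Ck_const Ck_add)

lemma Ck_compose:
  fixes g :: "'b::euclidean_space \<Rightarrow> real" and F :: "'a::euclidean_space \<Rightarrow> 'b"
  shows "Ck n g \<Longrightarrow> (\<And>c. c \<in> Basis \<Longrightarrow> Ck n (\<lambda>x. F x \<bullet> c)) \<Longrightarrow> Ck n (\<lambda>x. g (F x))"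
proof (induction n arbitrary: g)
  case 0
  have "F differentiable (at x)" for x
    using 0(2) by (subst differentiable_componentwise_within) (auto)
  then show ?case using 0 differentiable_chain_at[of F _ g] by (simp add: o_def)
next
  case (Suc n)
  have Fd: "F differentiable (at x)" for x
    using Suc(3) by (subst differentiable_componentwise_within) (auto dest: Ck_diff)
  have gd: "g differentiable (at y)" for y using Suc(2) by auto
  have "pd (\<lambda>x. g (F x)) b = (\<lambda>x. \<Sum>c\<in>Basis. pd (\<lambda>x. F x \<bullet> c) b x * pd g c (F x))" for b
  proof
    fix x
    have dF: "(F has_derivative frechet_derivative F (at x)) (at x)"
      using Fd frechet_derivative_works by blast
    have dg: "(g has_derivative frechet_derivative g (at (F x))) (at (F x))"
      using gd frechet_derivative_works by blast
    have "pd (\<lambda>x. g (F x)) b x = frechet_derivative g (at (F x)) (frechet_derivative F (at x) b)"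
      using pd_eq[OF diff_chain_at[OF dF dg]] by (simp add: o_def)
    also have "\<dots> = pd g (frechet_derivative F (at x) b) (F x)" by (simp add: pd_def)
    also have "\<dots> = (\<Sum>c\<in>Basis. (frechet_derivative F (at x) b \<bullet> c) * pd g c (F x))"
      using gd pd_linear by blast
    also have "\<dots> = (\<Sum>c\<in>Basis. pd (\<lambda>x. F x \<bullet> c) b x * pd g c (F x))"
    proof (rule sum.cong[OF refl])
      fix c :: 'b
      have "((\<lambda>x. F x \<bullet> c) has_derivative (\<lambda>h. frechet_derivative F (at x) h \<bullet> c)) (at x)"
        using dF by (auto intro!: derivative_eq_intros)
      then show "(frechet_derivative F (at x) b \<bullet> c) * pd g c (F x) = pd (\<lambda>x. F x \<bullet> c) b x * pd g c (F x)"
        by (simp add: pd_eq)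
    qed
    finally show "pd (\<lambda>x. g (F x)) b x = (\<Sum>c\<in>Basis. pd (\<lambda>x. F x \<bullet> c) b x * pd g c (F x))" .
  qed
  moreover have "Ck n (\<lambda>x. F x \<bullet> c)" if "c \<in> Basis" for c using Suc(3)[OF that] Ck_Suc_mono by blast
  moreover have "Ck n (pd (\<lambda>x. F x \<bullet> c) b)" if "c \<in> Basis" "b \<in> Basis" for b c using Suc(3)[OF that(1)] that(2) by auto
  moreover have "Ck n (\<lambda>x. pd g c (F x))" if "c \<in> Basis" for c
    using Suc.IH[of "pd g c"] Suc(2) that calculation(2) by auto
  ultimately have "Ck n (pd (\<lambda>x. g (F x)) b)" if "b \<in> Basis" for b
    using that by (auto intro!: Ck_sum Ck_mult)
  moreover have "(\<lambda>x. g (F x)) differentiable (at x)" for x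
    using Fd gd differentiable_chain_at[of F _ g] by (simp add: o_def)
  ultimately show ?case by auto
qed

lemma smooth_const: "smooth_fn (\<lambda>x. c)"
  by (simp add: smooth_iff_Ck Ck_const)
lemma smooth_add: "smooth_fn f \<Longrightarrow> smooth_fn g \<Longrightarrow> smooth_fn (\<lambda>x. f x + g x)"
  by (simp add: smooth_iff_Ck Ck_add)
lemma smooth_mult: "smooth_fn f \<Longrightarrow> smooth_fn g \<Longrightarrow> smooth_fn (\<lambda>x. f x * g x)"
  by (simp add: smooth_iff_Ck Ck_mult)
lemma smooth_sum: "finite S \<Longrightarrow> (\<And>i. i \<in> S \<Longrightarrow> smooth_fn (f i)) \<Longrightarrow> smooth_fn (\<lambda>x. \<Sum>i\<in>S. f i x)"
  by (simp add: smooth_iff_Ck Ck_sum)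
lemma smooth_compose:
  fixes g :: "'b::euclidean_space \<Rightarrow> real" and F :: "'a::euclidean_space \<Rightarrow> 'b"
  shows "smooth_fn g \<Longrightarrow> (\<And>c. c \<in> Basis \<Longrightarrow> smooth_fn (\<lambda>x. F x \<bullet> c)) \<Longrightarrow> smooth_fn (\<lambda>x. g (F x))"
  by (simp add: smooth_iff_Ck Ck_compose)
lemma smooth_uminus: "smooth_fn f \<Longrightarrow> smooth_fn (\<lambda>x. - f x)"
  using smooth_mult[OF smooth_const[of "-1"]] by simp
lemma smooth_diff_fn: "smooth_fn f \<Longrightarrow> smooth_fn g \<Longrightarrow> smooth_fn (\<lambda>x. f x - g x)"
  using smooth_add[OF _ smooth_uminus] by simp
lemma smooth_prod: "finite S \<Longrightarrow> (\<And>i. i \<in> S \<Longrightarrow> smooth_fn (f i)) \<Longrightarrow> smooth_fn (\<lambda>x. \<Prod>i\<in>S. f i x)"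
  by (induction S rule: finite_induct) (auto intro: smooth_const smooth_mult)

lemma smooth_linear: "bounded_linear l \<Longrightarrow> smooth_fn l"
proof -
  assume l: "bounded_linear l"
  have "pd l b = (\<lambda>x. l b)" for b
    by (rule ext, rule pd_eq) (use l in \<open>rule bounded_linear.has_derivative[OF _ has_derivative_ident]\<close>)
  then have "Ck (Suc n) l" for n
    using l by (auto simp: Ck_const bounded_linear_imp_differentiable)
  then show ?thesis using Ck_Suc_mono smooth_iff_Ck by blast
qed


lemma pd_real_deriv: "(f has_real_derivative D) (at x) \<Longrightarrow> pd f 1 x = D"
  by (drule pd_eq[of f "(*) D" x 1, unfolded has_field_derivative_def[symmetric]]) simp

lemma Ck_real_Suc: "Ck (Suc n) (f :: real \<Rightarrow> real) \<longleftrightarrow> (\<forall>x. f differentiable (at x)) \<and> Ck n (pd f 1)"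
  by simp

lemma Ck_sin_cos: "Ck n sin \<and> Ck n cos"
proof (induction n)
  case 0 then show ?case by (auto simp: real_differentiable_def intro: DERIV_sin DERIV_cos)
next
  case (Suc n)
  have "pd sin 1 = cos" by (rule ext, rule pd_real_deriv) (rule DERIV_sin)
  moreover have "pd cos 1 = (\<lambda>x. - sin x)" by (rule ext, rule pd_real_deriv) (rule DERIV_cos)
  moreover have "Ck n (\<lambda>x. - sin x)" using Suc Ck_mult[OF Ck_const[of n "-1"]] by auto
  ultimately show ?case using Suc by (auto simp: real_differentiable_def intro: DERIV_sin DERIV_cos)
qed

lemma smooth_sin: "smooth_fn sin"
  using Ck_sin_cos smooth_iff_Ck by blast

definition PE :: "real poly \<Rightarrow> real \<Rightarrow> real" where
  "PE p z = (if z > 0 then poly p (1/z) * exp (- (1/z)) else 0)"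

lemma poly_exp_at_top: "((\<lambda>w. poly p w * exp (- w)) \<longlongrightarrow> 0) at_top" for p :: "real poly"
proof -
  have "((\<lambda>w. \<Sum>i\<le>degree p. coeff p i * (w ^ i / exp w)) \<longlongrightarrow> (\<Sum>i\<le>degree p. coeff p i * 0)) at_top"
    by (intro tendsto_sum tendsto_mult tendsto_const tendsto_power_div_exp_0)
  moreover have "poly p w * exp (- w) = (\<Sum>i\<le>degree p. coeff p i * (w ^ i / exp w))" for w
    by (simp add: poly_altdef sum_distrib_right exp_minus divide_inverse mult.assoc)
  ultimately show ?thesis by simp
qed

lemma poly_exp_at_right: "((\<lambda>z. poly p (1/z) * exp (- (1/z))) \<longlongrightarrow> 0) (at_right 0)" for p :: "real poly"
proof -
  have "((\<lambda>z. poly p (inverse z) * exp (- inverse z)) \<longlongrightarrow> 0) (at_right 0)"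
    using filterlim_compose[OF poly_exp_at_top[of p] filterlim_inverse_at_top_right] by (simp add: o_def)
  then show ?thesis by (simp add: inverse_eq_divide)
qed

definition PEq :: "real poly \<Rightarrow> real poly" where
  "PEq p = [:0, 0, 1:] * (p - pderiv p)"

lemma PE_deriv: "(PE p has_real_derivative PE (PEq p) z) (at z)"
proof -
  consider "z > 0" | "z < 0" | "z = 0" by linarith
  then show ?thesis
  proof cases
    case 1
    have i: "((\<lambda>z. 1/z) has_real_derivative (- 1 / z^2)) (at z)"
      using 1 by (auto intro!: derivative_eq_intros simp: power2_eq_square)
    have a: "((\<lambda>z. poly p (1/z)) has_real_derivative poly (pderiv p) (1/z) * (- 1 / z^2)) (at z)"
      by (rule DERIV_chain2[OF poly_DERIV i])
    have b: "((\<lambda>z. exp (- (1/z))) has_real_derivative exp (- (1/z)) * (1/z^2)) (at z)"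
      using DERIV_chain2[OF DERIV_exp DERIV_minus[OF i]] by simp
    have "((\<lambda>z. poly p (1/z) * exp (- (1/z))) has_real_derivative
           (poly p (1/z) * (exp (- (1/z)) * (1/z^2)) + poly (pderiv p) (1/z) * (- 1 / z^2) * exp (- (1/z)))) (at z)"
      by (rule DERIV_cong[OF DERIV_mult[OF a b]]) (simp add: algebra_simps)
    moreover have "poly p (1/z) * (exp (- (1/z)) * (1/z^2)) + poly (pderiv p) (1/z) * (- 1 / z^2) * exp (- (1/z))
        = PE (PEq p) z"
    proof -
      have q: "poly (PEq p) w = w^2 * (poly p w - poly (pderiv p) w)" for w
        by (simp add: PEq_def power2_eq_square algebra_simps)
      have z: "1/z^2 = (1/z)^2" "- 1 / z^2 = - ((1/z)^2)" by (simp_all add: power_divide)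
      have r: "a*(E*w^2) + b*(-(w^2))*E = w^2*(a-b)*E" for a b E w :: real by algebra
      have "PE (PEq p) z = (1/z)^2 * (poly p (1/z) - poly (pderiv p) (1/z)) * exp (- (1/z))"
        using 1 unfolding PE_def q by (rule if_P)
      then show ?thesis unfolding z r by simp
    qed
    ultimately have d: "((\<lambda>z. poly p (1/z) * exp (- (1/z))) has_real_derivative PE (PEq p) z) (at z)"
      by (rule DERIV_cong)
    show ?thesis
      by (rule has_field_derivative_transform_within_open[OF d, of "{0<..}"]) (use 1 in \<open>auto simp: PE_def\<close>)
  next
    case 2
    have d: "((\<lambda>z. 0) has_real_derivative PE (PEq p) z) (at z)" using 2 by (simp add: PE_def)
    show ?thesis
      by (rule has_field_derivative_transform_within_open[OF d, of "{..<0}"]) (use 2 in \<open>auto simp: PE_def\<close>)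
  next
    case 3
    have L: "((\<lambda>y. (PE p y - PE p 0) / (y - 0)) \<longlongrightarrow> 0) (at_left 0)"
    proof (rule Lim_transform_eventually[OF tendsto_const[of 0]])
      show "\<forall>\<^sub>F x in at_left 0. 0 = (PE p x - PE p 0) / (x - 0)"
      proof -
        have "\<forall>\<^sub>F y in at_left (0::real). y < 0" by (simp add: eventually_at_filter)
        then show ?thesis
        proof eventually_elim
          case (elim x) then have "PE p x = 0" "PE p 0 = 0" by (auto simp: PE_def)
          then show ?case by simp
        qed
      qed
    qed
    have R: "((\<lambda>y. (PE p y - PE p 0) / (y - 0)) \<longlongrightarrow> 0) (at_right 0)"
    proof (rule Lim_transform_eventually[OF poly_exp_at_right[of "pCons 0 p"]])
      show "\<forall>\<^sub>F x in at_right 0. poly (pCons 0 p) (1 / x) * exp (- (1 / x)) = (PE p x - PE p 0) / (x - 0)"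
      proof -
        have "\<forall>\<^sub>F y in at_right (0::real). 0 < y" by (rule eventually_at_right_less)
        then show ?thesis
        proof eventually_elim
          case (elim x) then have "PE p x = poly p (1/x) * exp (- (1/x))" "PE p 0 = 0" by (auto simp: PE_def)
          then show ?case using elim by (simp add: field_simps)
        qed
      qed
    qed
    have "((\<lambda>y. (PE p y - PE p 0) / (y - 0)) \<longlongrightarrow> 0) (at 0)"
      using L R by (simp add: filterlim_at_split)
    then show ?thesis using 3 by (simp add: has_field_derivative_iff PE_def)
  qed
qed

lemma Ck_PE: "Ck n (PE p)"
proof (induction n arbitrary: p)
  case 0 then show ?case using PE_deriv by (auto simp: real_differentiable_def)
next
  case (Suc n)
  have "pd (PE p) 1 = PE (PEq p)" by (rule ext, rule pd_real_deriv, rule PE_deriv)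
  then show ?case using Suc PE_deriv by (auto simp: real_differentiable_def)
qed

definition psi :: "real \<Rightarrow> real" where "psi z = (if z > 0 then exp (- (1/z)) else 0)"

lemma smooth_psi: "smooth_fn psi"
proof -
  have "psi = PE 1" by (auto simp: psi_def PE_def)
  then show ?thesis using Ck_PE smooth_iff_Ck by metis
qed

lemma smooth_compose_real: "smooth_fn (g :: real \<Rightarrow> real) \<Longrightarrow> smooth_fn (F :: 'a::euclidean_space \<Rightarrow> real) \<Longrightarrow> smooth_fn (\<lambda>x. g (F x))"
  by (rule smooth_compose) auto

definition bump :: "real \<Rightarrow> real" where "bump y = psi (1 - y * y)"

lemma smooth_bump: "smooth_fn bump"
  unfolding bump_def
  by (rule smooth_compose_real[OF smooth_psi], intro smooth_diff_fn smooth_mult smooth_const smooth_linear bounded_linear_ident)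

lemma bump_nonneg: "bump y \<ge> 0" by (simp add: bump_def psi_def)
lemma bump_pos_iff: "bump y > 0 \<longleftrightarrow> \<bar>y\<bar> < 1"
proof -
  have "1 - y*y > 0 \<longleftrightarrow> \<bar>y\<bar> < 1"
    by (simp add: abs_square_less_1[symmetric] power2_eq_square)
  then show ?thesis by (simp add: bump_def psi_def)
qed
lemma bump_even: "bump (- y) = bump y" by (simp add: bump_def)


type_synonym pt = "real \<times> (real^3)"

definition Dx :: "3 \<Rightarrow> (pt \<Rightarrow> real) \<Rightarrow> pt \<Rightarrow> real" where
  "Dx j F = pd F (0, axis j 1)"
definition Dt :: "(pt \<Rightarrow> real) \<Rightarrow> pt \<Rightarrow> real" where
  "Dt F = pd F (1, 0)"

lemma basis_x: "((0::real), axis j (1::real) :: real^3) \<in> Basis"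
  by (auto simp: Basis_prod_def Basis_vec_def)
lemma basis_t: "((1::real), 0::real^3) \<in> Basis"
  by (auto simp: Basis_prod_def)

lemma smooth_Dx: "smooth_fn F \<Longrightarrow> smooth_fn (Dx j F)"
  unfolding Dx_def using smooth_pd basis_x by blast
lemma smooth_Dt: "smooth_fn F \<Longrightarrow> smooth_fn (Dt F)"
  unfolding Dt_def using smooth_pd basis_t by blast

lemma fd_linear_scale: "f differentiable (at x) \<Longrightarrow> frechet_derivative f (at x) (c *\<^sub>R v) = c * frechet_derivative f (at x) v"
  by (metis frechet_derivative_works has_derivative_linear linear_scale real_scaleR_def)

lemma hasderiv_t: "F differentiable (at (t,x)) \<Longrightarrow> ((\<lambda>\<tau>. F (\<tau>, x)) has_real_derivative Dt F (t,x)) (at t)"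
proof -
  assume d: "F differentiable (at (t,x))"
  have i: "((\<lambda>\<tau>. (\<tau>, x)) has_derivative (\<lambda>h. (h, 0))) (at t)"
    by (auto intro!: derivative_eq_intros)
  have "((\<lambda>\<tau>. F (\<tau>, x)) has_derivative (\<lambda>h. frechet_derivative F (at (t,x)) (h, 0))) (at t)"
    using diff_chain_at[OF i d[unfolded frechet_derivative_works]] by (simp add: o_def)
  moreover have "frechet_derivative F (at (t,x)) (h, 0) = Dt F (t,x) * h" for h
    using fd_linear_scale[OF d, of h "(1,0)"] by (simp add: Dt_def pd_def)
  ultimately show ?thesis by (simp add: has_field_derivative_def mult_commute_abs)
qed

lemma hasderiv_x: "F differentiable (at (t, x + h *\<^sub>R axis j 1)) \<Longrightarrow>
   ((\<lambda>h. F (t, x + h *\<^sub>R axis j 1)) has_real_derivative Dx j F (t, x + h *\<^sub>R axis j 1)) (at h)"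
proof -
  assume d: "F differentiable (at (t, x + h *\<^sub>R axis j 1))"
  have i: "((\<lambda>h. (t, x + h *\<^sub>R axis j 1)) has_derivative (\<lambda>d. (0, d *\<^sub>R axis j 1))) (at h)"
    by (auto intro!: derivative_eq_intros)
  have "((\<lambda>h. F (t, x + h *\<^sub>R axis j 1)) has_derivative (\<lambda>d. frechet_derivative F (at (t, x + h *\<^sub>R axis j 1)) (0, d *\<^sub>R axis j 1))) (at h)"
    using diff_chain_at[OF i d[unfolded frechet_derivative_works]] by (simp add: o_def)
  moreover have "frechet_derivative F (at (t, x + h *\<^sub>R axis j 1)) (0, d *\<^sub>R axis j 1) = Dx j F (t, x + h *\<^sub>R axis j 1) * d" for d
    using fd_linear_scale[OF d, of d "(0, axis j 1)"] by (simp add: Dx_def pd_def)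
  ultimately show ?thesis by (simp add: has_field_derivative_def mult_commute_abs)
qed

lemma pdx_Dx: "F differentiable (at (t,x)) \<Longrightarrow> pdx j (\<lambda>y. F (t, y)) x = Dx j F (t,x)"
  unfolding pdx_def using hasderiv_x[of F t x 0 j] by (simp add: DERIV_imp_deriv)

lemma deriv_Dt: "F differentiable (at (t,x)) \<Longrightarrow> deriv (\<lambda>\<tau>. F (\<tau>, x)) t = Dt F (t,x)"
  using hasderiv_t DERIV_imp_deriv by blast

lemma Dx_add: "F differentiable (at p) \<Longrightarrow> G differentiable (at p) \<Longrightarrow> Dx j (\<lambda>p. F p + G p) p = Dx j F p + Dx j G p"
  unfolding Dx_def by (rule pd_eq) (auto intro!: derivative_eq_intros simp: frechet_derivative_works[symmetric] pd_def)
lemma Dx_diff: "F differentiable (at p) \<Longrightarrow> G differentiable (at p) \<Longrightarrow> Dx j (\<lambda>p. F p - G p) p = Dx j F p - Dx j G p"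
  unfolding Dx_def by (rule pd_eq) (auto intro!: derivative_eq_intros simp: frechet_derivative_works[symmetric] pd_def)
lemma Dx_mult: "F differentiable (at p) \<Longrightarrow> G differentiable (at p) \<Longrightarrow> Dx j (\<lambda>p. F p * G p) p = F p * Dx j G p + Dx j F p * G p"
  unfolding Dx_def by (rule pd_eq) (auto intro!: derivative_eq_intros simp: frechet_derivative_works[symmetric] pd_def)
lemma Dx_minus: "F differentiable (at p) \<Longrightarrow> Dx j (\<lambda>p. - F p) p = - Dx j F p"
  unfolding Dx_def by (rule pd_eq) (auto intro!: derivative_eq_intros simp: frechet_derivative_works[symmetric] pd_def)
lemma Dx_const: "Dx j (\<lambda>p. c) p = 0"
  unfolding Dx_def by (rule pd_eq) (auto intro!: derivative_eq_intros)
lemma Dt_add: "F differentiable (at p) \<Longrightarrow> G differentiable (at p) \<Longrightarrow> Dt (\<lambda>p. F p + G p) p = Dt F p + Dt G p"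
  unfolding Dt_def by (rule pd_eq) (auto intro!: derivative_eq_intros simp: frechet_derivative_works[symmetric] pd_def)
lemma Dt_mult: "F differentiable (at p) \<Longrightarrow> G differentiable (at p) \<Longrightarrow> Dt (\<lambda>p. F p * G p) p = F p * Dt G p + Dt F p * G p"
  unfolding Dt_def by (rule pd_eq) (auto intro!: derivative_eq_intros simp: frechet_derivative_works[symmetric] pd_def)


abbreviation one3 :: "real^3" where "one3 \<equiv> (\<chi> i. 1)"

lemma cell_split_le: assumes "0 \<le> c" "c \<le> 1" shows "cell \<inter> {x. x \<bullet> axis j 1 \<le> c} = cbox 0 (\<chi> i. if i = j then c else 1)"
proof (rule set_eqI)
  fix x :: "real^3"
  have 1: "x \<in> cell \<inter> {x. x \<bullet> axis j 1 \<le> c} \<longleftrightarrow> (\<forall>i. 0 \<le> x$i \<and> x$i \<le> 1) \<and> x$j \<le> c"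
    by (simp add: cell_def mem_box_cart inner_axis)
  have 2: "x \<in> cbox 0 (\<chi> i. if i = j then c else 1) \<longleftrightarrow> (\<forall>i. 0 \<le> x$i \<and> x$i \<le> (if i = j then c else 1))"
    by (simp add: mem_box_cart)
  have 3: "((\<forall>i. 0 \<le> x$i \<and> x$i \<le> 1) \<and> x$j \<le> c) \<longleftrightarrow> (\<forall>i. 0 \<le> x$i \<and> x$i \<le> (if i = j then c else 1))"
  proof
    assume L: "(\<forall>i. 0 \<le> x$i \<and> x$i \<le> 1) \<and> x$j \<le> c"
    show "\<forall>i. 0 \<le> x$i \<and> x$i \<le> (if i = j then c else 1)"
    proof
      fix i show "0 \<le> x$i \<and> x$i \<le> (if i = j then c else 1)" using L by (cases "i = j") auto
    qed
  next
    assume R: "\<forall>i. 0 \<le> x$i \<and> x$i \<le> (if i = j then c else 1)"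
    have "0 \<le> x$i \<and> x$i \<le> 1" for i using R[rule_format, of i] assms by (cases "i = j") auto
    moreover have "x$j \<le> c" using R[rule_format, of j] by simp
    ultimately show "(\<forall>i. 0 \<le> x$i \<and> x$i \<le> 1) \<and> x$j \<le> c" by blast
  qed
  show "x \<in> cell \<inter> {x. x \<bullet> axis j 1 \<le> c} \<longleftrightarrow> x \<in> cbox 0 (\<chi> i. if i = j then c else 1)"
    unfolding 1 2 3 ..
qed

lemma cell_split_ge: assumes "0 \<le> c" "c \<le> 1" shows "cell \<inter> {x. x \<bullet> axis j 1 \<ge> c} = cbox (\<chi> i. if i = j then c else 0) one3"
proof (rule set_eqI)
  fix x :: "real^3"
  have 1: "x \<in> cell \<inter> {x. x \<bullet> axis j 1 \<ge> c} \<longleftrightarrow> (\<forall>i. 0 \<le> x$i \<and> x$i \<le> 1) \<and> x$j \<ge> c"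
    by (simp add: cell_def mem_box_cart inner_axis)
  have 2: "x \<in> cbox (\<chi> i. if i = j then c else 0) one3 \<longleftrightarrow> (\<forall>i. (if i = j then c else 0) \<le> x$i \<and> x$i \<le> 1)"
    by (simp add: mem_box_cart)
  have 3: "((\<forall>i. 0 \<le> x$i \<and> x$i \<le> 1) \<and> x$j \<ge> c) \<longleftrightarrow> (\<forall>i. (if i = j then c else 0) \<le> x$i \<and> x$i \<le> 1)"
  proof
    assume L: "(\<forall>i. 0 \<le> x$i \<and> x$i \<le> 1) \<and> x$j \<ge> c"
    show "\<forall>i. (if i = j then c else 0) \<le> x$i \<and> x$i \<le> 1"
    proof
      fix i show "(if i = j then c else 0) \<le> x$i \<and> x$i \<le> 1" using L by (cases "i = j") auto
    qed
  next
    assume R: "\<forall>i. (if i = j then c else 0) \<le> x$i \<and> x$i \<le> 1"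
    have "0 \<le> x$i \<and> x$i \<le> 1" for i using R[rule_format, of i] assms by (cases "i = j") auto
    moreover have "x$j \<ge> c" using R[rule_format, of j] by simp
    ultimately show "(\<forall>i. 0 \<le> x$i \<and> x$i \<le> 1) \<and> x$j \<ge> c" by blast
  qed
  show "x \<in> cell \<inter> {x. x \<bullet> axis j 1 \<ge> c} \<longleftrightarrow> x \<in> cbox (\<chi> i. if i = j then c else 0) one3"
    unfolding 1 2 3 ..
qed

lemma axis_in_Basis3: "axis j (1::real) \<in> (Basis :: (real^3) set)"
  by (auto simp: Basis_vec_def)

lemma trans_inv01:
  fixes f :: "real^3 \<Rightarrow> real"
  assumes cont: "continuous_on UNIV f" and per: "\<And>x. f (x + axis j 1) = f x" and h: "0 \<le> h" "h \<le> 1"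
  shows "integral cell (\<lambda>x. f (x + h *\<^sub>R axis j 1)) = integral cell f"
proof -
  define e :: "real^3" where "e = axis j 1"
  define a1 :: "real^3" where "a1 = (\<chi> i. if i = j then h else 0)"
  define b2 :: "real^3" where "b2 = (\<chi> i. if i = j then h else 1)"
  have int: "f integrable_on cbox a b" for a b
    by (rule integrable_continuous[OF continuous_on_subset[OF cont]]) auto
  have IA: "(f has_integral integral (cbox a1 one3) f) (cbox a1 one3)" using int by blast
  have IB: "(f has_integral integral (cbox 0 b2) f) (cbox 0 b2)" using int by blast
  have A: "((\<lambda>x. f (x + h *\<^sub>R e)) has_integral integral (cbox a1 one3) f) (cbox 0 (\<chi> i. if i = j then 1 - h else 1))"
  proof -
    have "((\<lambda>x. f (1 *\<^sub>R x + h *\<^sub>R e)) has_integral (integral (cbox a1 one3) f /\<^sub>R 1 ^ DIM(real^3)))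
           (cbox ((a1 - h *\<^sub>R e) /\<^sub>R 1) ((one3 - h *\<^sub>R e) /\<^sub>R 1))"
      by (rule has_integral_affinity'[OF IA]) simp
    moreover have "a1 - h *\<^sub>R e = 0" "one3 - h *\<^sub>R e = (\<chi> i. if i = j then 1 - h else 1)"
      by (auto simp: vec_eq_iff a1_def e_def axis_def)
    ultimately show ?thesis by simp
  qed
  have B: "((\<lambda>x. f (x + h *\<^sub>R e)) has_integral integral (cbox 0 b2) f) (cbox (\<chi> i. if i = j then 1 - h else 0) one3)"
  proof -
    have "((\<lambda>x. f (1 *\<^sub>R x + (h - 1) *\<^sub>R e)) has_integral (integral (cbox 0 b2) f /\<^sub>R 1 ^ DIM(real^3)))
           (cbox ((0 - (h - 1) *\<^sub>R e) /\<^sub>R 1) ((b2 - (h - 1) *\<^sub>R e) /\<^sub>R 1))"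
      by (rule has_integral_affinity'[OF IB]) simp
    moreover have "0 - (h - 1) *\<^sub>R e = (\<chi> i. if i = j then 1 - h else 0)" "b2 - (h - 1) *\<^sub>R e = one3"
      by (auto simp: vec_eq_iff b2_def e_def axis_def)
    moreover have "f (x + (h - 1) *\<^sub>R e) = f (x + h *\<^sub>R e)" for x
    proof -
      have eq: "x + h *\<^sub>R e = (x + (h - 1) *\<^sub>R e) + axis j 1" by (simp add: e_def algebra_simps)
      have "f (x + h *\<^sub>R e) = f (x + (h - 1) *\<^sub>R e)" unfolding eq by (rule per)
      then show ?thesis by simp
    qed
    ultimately show ?thesis by simp
  qed
  have "((\<lambda>x. f (x + h *\<^sub>R e)) has_integral (integral (cbox a1 one3) f + integral (cbox 0 b2) f)) cell"
    using has_integral_split[OF _ _ axis_in_Basis3[of j], where f="\<lambda>x. f (x + h *\<^sub>R e)" and a=0 and b=one3 and c="1 - h"] A B h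
      cell_split_le[where c="1 - h" and j=j] cell_split_ge[where c="1 - h" and j=j]
    by (simp add: cell_def)
  moreover have "(f has_integral (integral (cbox 0 b2) f + integral (cbox a1 one3) f)) cell"
    using has_integral_split[OF _ _ axis_in_Basis3[of j], where f=f and a=0 and b=one3 and c=h] IA IB h
      cell_split_le[where c=h and j=j] cell_split_ge[where c=h and j=j]
    by (simp add: cell_def a1_def b2_def)
  ultimately show ?thesis unfolding e_def by (metis add.commute integral_unique)
qed

lemma periodic_pt_neg:
  assumes "\<And>x. f (x + axis j 1) = f x" shows "f (x + h *\<^sub>R axis j 1) = f (x + (h + 1) *\<^sub>R axis j 1)"
proof -
  have eq: "x + (h + 1) *\<^sub>R axis j 1 = (x + h *\<^sub>R axis j 1) + axis j 1" by (simp add: algebra_simps)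
  show ?thesis unfolding eq by (rule assms[symmetric])
qed

lemma cont_slice: "smooth_fn F \<Longrightarrow> continuous_on S (\<lambda>x. F (t, x))"
  by (intro continuous_on_compose2[OF smooth_cont[of F UNIV]]) (auto intro!: continuous_intros)

lemma cell_Dx_zero:
  fixes F :: "pt \<Rightarrow> real"
  assumes sm: "smooth_fn F" and per: "\<And>t x. F (t, x + axis j 1) = F (t, x)"
  shows "integral cell (\<lambda>x. Dx j F (t, x)) = 0"
proof -
  define G where "G h = integral cell (\<lambda>x. F (t, x + h *\<^sub>R axis j 1))" for h
  have G0: "G h = G 0" if "h \<in> {-1<..<1}" for h
  proof (cases "h \<ge> 0")
    case True
    then show ?thesis using that trans_inv01[of "\<lambda>x. F (t, x)" j h] per cont_slice[OF sm] by (simp add: G_def)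
  next
    case False
    have "G h = integral cell (\<lambda>x. F (t, x + (h + 1) *\<^sub>R axis j 1))"
      unfolding G_def using periodic_pt_neg[of "\<lambda>x. F (t, x)" j] per by simp
    also have "\<dots> = G 0"
      using False that trans_inv01[of "\<lambda>x. F (t, x)" j "h + 1"] per cont_slice[OF sm] by (simp add: G_def)
    finally show ?thesis .
  qed
  have cD: "continuous_on UNIV (Dx j F)" using smooth_cont smooth_Dx sm by blast
  have "(G has_field_derivative integral (cbox 0 one3) (\<lambda>x. Dx j F (t, x + 0 *\<^sub>R axis j 1))) (at 0 within UNIV)"
    unfolding G_def cell_def
  proof (rule leibniz_rule_field_derivative)
    fix h :: real and x :: "real^3"
    show "((\<lambda>h. F (t, x + h *\<^sub>R axis j 1)) has_field_derivative Dx j F (t, x + h *\<^sub>R axis j 1)) (at h within UNIV)"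
      using hasderiv_x[of F t x h j] smooth_diff[OF sm] by simp
  next
    fix h :: real
    show "(\<lambda>x. F (t, x + h *\<^sub>R axis j 1)) integrable_on cbox 0 one3"
      by (rule integrable_continuous, rule continuous_on_compose2[OF smooth_cont[OF sm, of UNIV]]) (auto intro!: continuous_intros)
  next
    have "continuous_on (UNIV \<times> cbox 0 one3) (\<lambda>p. Dx j F (t, snd p + fst p *\<^sub>R axis j 1))"
      by (rule continuous_on_compose2[OF cD]) (auto intro!: continuous_intros)
    then show "continuous_on (UNIV \<times> cbox 0 one3) (\<lambda>(h, x). Dx j F (t, x + h *\<^sub>R axis j 1))"
      by (simp add: split_beta)
  qed auto
  moreover have "(G has_field_derivative 0) (at 0)"
  proof (rule has_field_derivative_transform_within_open[of "\<lambda>h. G 0" 0 0 "{-1<..<1}"])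
    show "((\<lambda>h. G 0) has_field_derivative 0) (at 0)" by simp
  next
    fix x :: real assume "x \<in> {-1<..<1}" then show "G 0 = G x" using G0 by metis
  qed auto
  ultimately show ?thesis unfolding cell_def by (simp add: DERIV_unique)
qed

abbreviation K :: "real \<Rightarrow> pt set" where "K Tf \<equiv> cbox (0, 0) (Tf, one3)"

lemma K_Dx_zero:
  fixes F :: "pt \<Rightarrow> real"
  assumes sm: "smooth_fn F" and per: "\<And>t x. F (t, x + axis j 1) = F (t, x)"
  shows "integral (K Tf) (Dx j F) = 0"
proof -
  have "integral (K Tf) (Dx j F) = integral (cbox 0 Tf) (\<lambda>t. integral (cbox 0 one3) (\<lambda>x. Dx j F (t, x)))"
    by (rule integral_prod_continuous) (use smooth_cont smooth_Dx sm in blast)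
  also have "\<dots> = 0" using cell_Dx_zero[OF sm per] by (simp add: cell_def)
  finally show ?thesis .
qed

lemma K_Dt_zero:
  fixes F :: "pt \<Rightarrow> real"
  assumes sm: "smooth_fn F" and z: "\<And>x. F (0, x) = 0" "\<And>x. F (Tf, x) = 0" and Tf: "0 \<le> Tf"
  shows "integral (K Tf) (Dt F) = 0"
proof -
  have cD: "continuous_on UNIV (Dt F)" using smooth_cont smooth_Dt sm by blast
  have "integral (K Tf) (Dt F) = integral (cbox 0 Tf) (\<lambda>t. integral (cbox 0 one3) (\<lambda>x. Dt F (t, x)))"
    by (rule integral_prod_continuous) (use cD continuous_on_subset in blast)
  also have "\<dots> = integral (cbox 0 one3) (\<lambda>x. integral (cbox 0 Tf) (\<lambda>t. Dt F (t, x)))"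
    by (rule integral_swap_continuous) (use cD in \<open>auto intro: continuous_on_subset simp: split_beta\<close>)
  also have "\<dots> = integral (cbox 0 one3) (\<lambda>x. 0)"
  proof (rule integral_cong)
    fix x :: "real^3"
    have "((\<lambda>t. Dt F (t, x)) has_integral (F (Tf, x) - F (0, x))) {0..Tf}"
    proof (rule fundamental_theorem_of_calculus[OF Tf])
      fix t assume "t \<in> {0..Tf}"
      show "((\<lambda>t. F (t, x)) has_vector_derivative Dt F (t, x)) (at t within {0..Tf})"
        using hasderiv_t[of F t x] smooth_diff[OF sm]
        by (simp add: has_real_derivative_iff_has_vector_derivative[symmetric] has_field_derivative_at_within)
    qed
    then show "integral (cbox 0 Tf) (\<lambda>t. Dt F (t, x)) = 0" using z by (simp add: integral_unique)
  qed
  finally show ?thesis by simp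
qed


definition e2of :: "(real \<Rightarrow> real \<Rightarrow> real) \<Rightarrow> real \<times> real \<Rightarrow> real" where
  "e2of e = (\<lambda>q. e (fst q) (snd q))"

lemma fd_pair_decomp:
  assumes "g differentiable (at q)"
  shows "frechet_derivative g (at q) (a, b) = a * pd g (1, 0) q + b * pd g (0, 1) q"
proof -
  have lin: "linear (frechet_derivative g (at q))"
    using assms frechet_derivative_works has_derivative_linear by blast
  have "(a, b) = a *\<^sub>R (1::real, 0::real) + b *\<^sub>R (0, 1)" by simp
  then have "frechet_derivative g (at q) (a, b) = frechet_derivative g (at q) (a *\<^sub>R (1::real, 0::real) + b *\<^sub>R (0, 1))"
    by metis
  also have "\<dots> = a * pd g (1, 0) q + b * pd g (0, 1) q"
    by (simp only: linear_add[OF lin] linear_scale[OF lin] pd_def real_scaleR_def)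
  finally show ?thesis .
qed

lemma e_chain:
  fixes e :: "real \<Rightarrow> real \<Rightarrow> real"
  assumes d: "e2of e differentiable (at (r + \<epsilon> * dr, ss + \<epsilon> * ds))"
  shows "((\<lambda>\<epsilon>. e (r + \<epsilon> * dr) (ss + \<epsilon> * ds)) has_real_derivative
     (pd (e2of e) (1, 0) (r + \<epsilon> * dr, ss + \<epsilon> * ds) * dr + pd (e2of e) (0, 1) (r + \<epsilon> * dr, ss + \<epsilon> * ds) * ds)) (at \<epsilon>)"
proof -
  define q where "q = (r + \<epsilon> * dr, ss + \<epsilon> * ds)"
  have i: "((\<lambda>\<epsilon>. (r + \<epsilon> * dr, ss + \<epsilon> * ds)) has_derivative (\<lambda>h. (h * dr, h * ds))) (at \<epsilon>)"
    by (auto intro!: derivative_eq_intros)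
  have "((\<lambda>\<epsilon>. e2of e (r + \<epsilon> * dr, ss + \<epsilon> * ds)) has_derivative (\<lambda>h. frechet_derivative (e2of e) (at q) (h * dr, h * ds))) (at \<epsilon>)"
    using diff_chain_at[OF i d[unfolded frechet_derivative_works]] by (simp add: o_def q_def)
  moreover have "frechet_derivative (e2of e) (at q) (h * dr, h * ds) = h * (pd (e2of e) (1, 0) q * dr + pd (e2of e) (0, 1) q * ds)" for h
    using fd_pair_decomp[OF d[folded q_def]] by (simp add: algebra_simps)
  ultimately show ?thesis
    by (simp add: has_field_derivative_def e2of_def q_def mult_commute_abs)
qed

lemma d_rho_pd: "e2of e differentiable (at (r, ss)) \<Longrightarrow> d_rho e r ss = pd (e2of e) (1, 0) (r, ss)"
  using e_chain[of e 0 r 1 ss 0] by (simp add: d_rho_def DERIV_imp_deriv)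
lemma d_s_pd: "e2of e differentiable (at (r, ss)) \<Longrightarrow> d_s e r ss = pd (e2of e) (0, 1) (r, ss)"
  using e_chain[of e r ss 0 0 1] by (simp add: d_s_def DERIV_imp_deriv)

definition Lag :: "(real \<Rightarrow> real \<Rightarrow> real) \<Rightarrow> real^3 \<Rightarrow> real \<Rightarrow> real \<Rightarrow> real^3 \<Rightarrow> real" where
  "Lag e uu r ss bb = r * (norm uu)\<^sup>2 / 2 - r * e r ss - (norm bb)\<^sup>2 / 2"

lemma norm_lin_sq: "(norm (a + \<epsilon> *\<^sub>R b))\<^sup>2 = (norm a)\<^sup>2 + 2 * \<epsilon> * (a \<bullet> b) + \<epsilon>\<^sup>2 * (norm b)\<^sup>2"
  for a b :: "real^3"
  unfolding power2_norm_eq_inner by (simp add: inner_add_left inner_add_right inner_commute power2_eq_square algebra_simps)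

definition LagD :: "(real \<Rightarrow> real \<Rightarrow> real) \<Rightarrow> real^3 \<Rightarrow> real^3 \<Rightarrow> real \<Rightarrow> real \<Rightarrow> real \<Rightarrow> real \<Rightarrow> real^3 \<Rightarrow> real^3 \<Rightarrow> real \<Rightarrow> real" where
  "LagD e a da r dr ss ds b db \<epsilon> =
     dr * ((norm a)\<^sup>2 + 2 * \<epsilon> * (a \<bullet> da) + \<epsilon>\<^sup>2 * (norm da)\<^sup>2) / 2
     + (r + \<epsilon> * dr) * (2 * (a \<bullet> da) + 2 * \<epsilon> * (norm da)\<^sup>2) / 2
     - (dr * e (r + \<epsilon> * dr) (ss + \<epsilon> * ds)
        + (r + \<epsilon> * dr) * (pd (e2of e) (1, 0) (r + \<epsilon> * dr, ss + \<epsilon> * ds) * dr + pd (e2of e) (0, 1) (r + \<epsilon> * dr, ss + \<epsilon> * ds) * ds))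
     - (2 * (b \<bullet> db) + 2 * \<epsilon> * (norm db)\<^sup>2) / 2"

lemma Lag_deriv:
  assumes d: "\<And>q. e2of e differentiable (at q)"
  shows "((\<lambda>\<epsilon>. Lag e (a + \<epsilon> *\<^sub>R da) (r + \<epsilon> * dr) (ss + \<epsilon> * ds) (b + \<epsilon> *\<^sub>R db)) has_real_derivative
           LagD e a da r dr ss ds b db \<epsilon>) (at \<epsilon>)"
proof -
  have eq: "(\<lambda>\<epsilon>. Lag e (a + \<epsilon> *\<^sub>R da) (r + \<epsilon> * dr) (ss + \<epsilon> * ds) (b + \<epsilon> *\<^sub>R db)) =
    (\<lambda>\<epsilon>. (r + \<epsilon> * dr) * ((norm a)\<^sup>2 + 2 * \<epsilon> * (a \<bullet> da) + \<epsilon>\<^sup>2 * (norm da)\<^sup>2) / 2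
         - (r + \<epsilon> * dr) * e (r + \<epsilon> * dr) (ss + \<epsilon> * ds)
         - ((norm b)\<^sup>2 + 2 * \<epsilon> * (b \<bullet> db) + \<epsilon>\<^sup>2 * (norm db)\<^sup>2) / 2)"
    by (simp add: Lag_def norm_lin_sq)
  note ec = e_chain[OF d]
  show ?thesis unfolding eq LagD_def
    by (rule derivative_eq_intros ec refl | simp)+ (simp add: power2_eq_square field_simps)
qed


lemma cont_e:
  assumes "continuous_on UNIV (e2of e)" "continuous_on S f" "continuous_on S g"
  shows "continuous_on S (\<lambda>x. e (f x) (g x))"
proof -
  have "continuous_on S (\<lambda>x. e2of e (f x, g x))"
    by (rule continuous_on_compose2[OF assms(1)]) (auto intro!: continuous_intros assms(2,3))
  then show ?thesis by (simp add: e2of_def)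
qed

lemma cont_pde:
  assumes "smooth_fn (e2of e)" "b \<in> Basis" "continuous_on S f" "continuous_on S g"
  shows "continuous_on S (\<lambda>x. pd (e2of e) b (f x, g x))"
  by (rule continuous_on_compose2[OF smooth_cont[OF smooth_pd[OF assms(1,2)]]]) (auto intro!: continuous_intros assms(3,4))

lemma basis_10: "((1::real), (0::real)) \<in> Basis" and basis_01: "((0::real), (1::real)) \<in> Basis"
  by (auto simp: Basis_prod_def)

lemma action_as_K:
  fixes uu duu bb dbb :: "pt \<Rightarrow> real^3" and rr drr ss dss :: "pt \<Rightarrow> real"
  assumes "continuous_on (K Tf) (\<lambda>p. Lag e (uu p) (rr p) (ss p) (bb p))"
  shows "action e Tf (\<lambda>t x. uu (t, x)) (\<lambda>t x. rr (t, x)) (\<lambda>t x. ss (t, x)) (\<lambda>t x. bb (t, x))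
    = integral (K Tf) (\<lambda>p. Lag e (uu p) (rr p) (ss p) (bb p))"
  unfolding action_def lag_def cell_def
  using integral_prod_continuous[OF assms] by (simp add: Lag_def cbox_interval)

lemma action_deriv:
  fixes uu duu bb dbb :: "pt \<Rightarrow> real^3" and rr drr ss dss :: "pt \<Rightarrow> real"
  assumes se: "smooth_fn (e2of e)"
    and c: "continuous_on UNIV uu" "continuous_on UNIV duu" "continuous_on UNIV bb" "continuous_on UNIV dbb"
           "continuous_on UNIV rr" "continuous_on UNIV drr" "continuous_on UNIV ss"
    and cds: "continuous_on (K Tf) dss"
  shows "((\<lambda>\<epsilon>. action e Tf (\<lambda>t x. uu (t, x) + \<epsilon> *\<^sub>R duu (t, x)) (\<lambda>t x. rr (t, x) + \<epsilon> * drr (t, x))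
                 (\<lambda>t x. ss (t, x) + \<epsilon> * dss (t, x)) (\<lambda>t x. bb (t, x) + \<epsilon> *\<^sub>R dbb (t, x)))
         has_real_derivative
         integral (K Tf) (\<lambda>p. LagD e (uu p) (duu p) (rr p) (drr p) (ss p) (dss p) (bb p) (dbb p) 0)) (at 0)"
proof -
  have ce: "continuous_on UNIV (e2of e)" using smooth_cont[OF se] .
  have cK: "continuous_on (K Tf) f" if "continuous_on UNIV f" for f :: "pt \<Rightarrow> 'z::topological_space"
    using continuous_on_subset[OF that] by blast
  note cKs = cK[OF c(1)] cK[OF c(2)] cK[OF c(3)] cK[OF c(4)] cK[OF c(5)] cK[OF c(6)] cK[OF c(7)]
  have contL: "continuous_on (K Tf) (\<lambda>p. Lag e (uu p + \<epsilon> *\<^sub>R duu p) (rr p + \<epsilon> * drr p) (ss p + \<epsilon> * dss p) (bb p + \<epsilon> *\<^sub>R dbb p))" for \<epsilon>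
    unfolding Lag_def
    by (intro continuous_intros cont_e[OF ce] cKs cds) auto
  have act: "action e Tf (\<lambda>t x. uu (t, x) + \<epsilon> *\<^sub>R duu (t, x)) (\<lambda>t x. rr (t, x) + \<epsilon> * drr (t, x))
                 (\<lambda>t x. ss (t, x) + \<epsilon> * dss (t, x)) (\<lambda>t x. bb (t, x) + \<epsilon> *\<^sub>R dbb (t, x))
      = integral (K Tf) (\<lambda>p. Lag e (uu p + \<epsilon> *\<^sub>R duu p) (rr p + \<epsilon> * drr p) (ss p + \<epsilon> * dss p) (bb p + \<epsilon> *\<^sub>R dbb p))" for \<epsilon>
    using action_as_K[OF contL[of \<epsilon>]] by simp
  have "((\<lambda>\<epsilon>. integral (K Tf) (\<lambda>p. Lag e (uu p + \<epsilon> *\<^sub>R duu p) (rr p + \<epsilon> * drr p) (ss p + \<epsilon> * dss p) (bb p + \<epsilon> *\<^sub>R dbb p)))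
         has_field_derivative integral (K Tf) (\<lambda>p. LagD e (uu p) (duu p) (rr p) (drr p) (ss p) (dss p) (bb p) (dbb p) 0)) (at 0 within UNIV)"
  proof (rule leibniz_rule_field_derivative)
    fix \<epsilon> :: real and p :: pt
    show "((\<lambda>\<epsilon>. Lag e (uu p + \<epsilon> *\<^sub>R duu p) (rr p + \<epsilon> * drr p) (ss p + \<epsilon> * dss p) (bb p + \<epsilon> *\<^sub>R dbb p))
          has_field_derivative LagD e (uu p) (duu p) (rr p) (drr p) (ss p) (dss p) (bb p) (dbb p) \<epsilon>) (at \<epsilon> within UNIV)"
      using Lag_deriv[of e] smooth_diff[OF se] by simp
  next
    fix \<epsilon> :: real
    show "(\<lambda>p. Lag e (uu p + \<epsilon> *\<^sub>R duu p) (rr p + \<epsilon> * drr p) (ss p + \<epsilon> * dss p) (bb p + \<epsilon> *\<^sub>R dbb p)) integrable_on K Tf"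
      by (rule integrable_continuous[OF contL])
  next
    have cs: "continuous_on (UNIV \<times> K Tf) (\<lambda>z. f (snd z))" if "continuous_on (K Tf) f" for f :: "pt \<Rightarrow> 'z::topological_space"
      by (rule continuous_on_compose2[OF that]) (auto intro!: continuous_intros)
    note cS = cs[OF cKs(1)] cs[OF cKs(2)] cs[OF cKs(3)] cs[OF cKs(4)] cs[OF cKs(5)] cs[OF cKs(6)] cs[OF cKs(7)] cs[OF cds]
    have "continuous_on (UNIV \<times> K Tf) (\<lambda>z. LagD e (uu (snd z)) (duu (snd z)) (rr (snd z)) (drr (snd z)) (ss (snd z)) (dss (snd z)) (bb (snd z)) (dbb (snd z)) (fst z))"
      unfolding LagD_def
      by (intro continuous_intros cont_e[OF ce] cont_pde[OF se basis_10] cont_pde[OF se basis_01] cS) auto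
    then show "continuous_on (UNIV \<times> K Tf) (\<lambda>(\<epsilon>, p). LagD e (uu p) (duu p) (rr p) (drr p) (ss p) (dss p) (bb p) (dbb p) \<epsilon>)"
      by (simp add: split_beta)
  qed auto
  then show ?thesis unfolding act by simp
qed


lemma Dx_mult_s: "smooth_fn F \<Longrightarrow> smooth_fn G \<Longrightarrow> Dx j (\<lambda>p. F p * G p) p = F p * Dx j G p + Dx j F p * G p"
  by (simp add: Dx_mult smooth_diff)
lemma Dx_add_s: "smooth_fn F \<Longrightarrow> smooth_fn G \<Longrightarrow> Dx j (\<lambda>p. F p + G p) p = Dx j F p + Dx j G p"
  by (simp add: Dx_add smooth_diff)
lemma Dx_diff_s: "smooth_fn F \<Longrightarrow> smooth_fn G \<Longrightarrow> Dx j (\<lambda>p. F p - G p) p = Dx j F p - Dx j G p"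
  by (simp add: Dx_diff smooth_diff)
lemma Dx_minus_s: "smooth_fn F \<Longrightarrow> Dx j (\<lambda>p. - F p) p = - Dx j F p"
  by (simp add: Dx_minus smooth_diff)
lemma Dx_divc_s: assumes "smooth_fn F" "c \<noteq> 0" shows "Dx j (\<lambda>p. F p / c) p = Dx j F p / c"
  unfolding Dx_def using smooth_diff[OF assms(1), of p] assms(2)
  by (intro pd_eq) (auto intro!: derivative_eq_intros simp: frechet_derivative_works[symmetric] pd_def)
lemma Dt_mult_s: "smooth_fn F \<Longrightarrow> smooth_fn G \<Longrightarrow> Dt (\<lambda>p. F p * G p) p = F p * Dt G p + Dt F p * G p"
  by (simp add: Dt_mult smooth_diff)
lemma Dt_add_s: "smooth_fn F \<Longrightarrow> smooth_fn G \<Longrightarrow> Dt (\<lambda>p. F p + G p) p = Dt F p + Dt G p"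
  by (simp add: Dt_add smooth_diff)
lemma smooth_divc: "smooth_fn F \<Longrightarrow> smooth_fn (\<lambda>p. F p / c)"
  using smooth_mult[OF _ smooth_const[of "1/c"]] by simp

lemmas dsimps = Dx_mult_s Dx_add_s Dx_diff_s Dx_minus_s Dx_divc_s Dx_const Dt_mult_s Dt_add_s
  smooth_add smooth_mult smooth_diff_fn smooth_uminus smooth_const smooth_Dx smooth_Dt smooth_divc

locale ident =
  fixes R S E0 E1 E2 :: "pt \<Rightarrow> real" and U V Bm :: "3 \<Rightarrow> pt \<Rightarrow> real" and \<mu> :: real
  assumes sR: "smooth_fn R" and sS: "smooth_fn S" and sU: "\<And>i. smooth_fn (U i)" and sV: "\<And>i. smooth_fn (V i)"
    and sB: "\<And>i. smooth_fn (Bm i)" and sE0: "smooth_fn E0" and sE1: "smooth_fn E1" and sE2: "smooth_fn E2"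
    and chain: "\<And>j p. Dx j E0 p = E1 p * Dx j R p + E2 p * Dx j S p"
begin

lemmas sm = sR sS sU sV sB sE0 sE1 sE2

definition "Phi q = (U 1 q * U 1 q + U 2 q * U 2 q + U 3 q * U 3 q) / 2 - E0 q - R q * E1 q"

lemma sPhi: "smooth_fn Phi"
  unfolding Phi_def[abs_def] by (simp add: dsimps sm)

lemma pieceA: "(- (Dx 1 (\<lambda>q. R q * V 1 q) p + Dx 2 (\<lambda>q. R q * V 2 q) p + Dx 3 (\<lambda>q. R q * V 3 q) p)) * Phi p
  = Dx 1 (\<lambda>q. - (R q * V 1 q * Phi q)) p + Dx 2 (\<lambda>q. - (R q * V 2 q * Phi q)) p + Dx 3 (\<lambda>q. - (R q * V 3 q * Phi q)) p
    + (R p * V 1 p * Dx 1 Phi p + R p * V 2 p * Dx 2 Phi p + R p * V 3 p * Dx 3 Phi p)"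
  by (simp add: dsimps sm sPhi algebra_simps)

definition "UV q = U 1 q * V 1 q + U 2 q * V 2 q + U 3 q * V 3 q"
definition "dU i p = Dt (V i) p + (U 1 p * Dx 1 (V i) p + U 2 p * Dx 2 (V i) p + U 3 p * Dx 3 (V i) p)
   - (V 1 p * Dx 1 (U i) p + V 2 p * Dx 2 (U i) p + V 3 p * Dx 3 (U i) p)"

lemma sUV: "smooth_fn UV"
  unfolding UV_def[abs_def] by (simp add: dsimps sm)

lemma pieceB: "R p * (U 1 p * dU 1 p + U 2 p * dU 2 p + U 3 p * dU 3 p) =
  Dt (\<lambda>q. R q * UV q) p + (\<Sum>j\<in>UNIV. Dx j (\<lambda>q. R q * U j q * UV q) p) - Dt R p * UV p
  - (\<Sum>i\<in>UNIV. R p * Dt (U i) p * V i p)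
  - (\<Sum>i\<in>UNIV. \<Sum>j\<in>UNIV. Dx j (\<lambda>q. R q * U j q * U i q) p * V i p)
  - (\<Sum>i\<in>UNIV. \<Sum>j\<in>UNIV. R p * U i p * V j p * Dx j (U i) p)"
  unfolding dU_def by (simp add: dsimps sm sUV sum_3 UV_def algebra_simps)

lemma pieceC: "- \<mu> * (\<Sum>i\<in>UNIV. \<Sum>j\<in>UNIV. Dx j (U i) p * Dx j (V i) p) =
  (\<Sum>j\<in>UNIV. Dx j (\<lambda>q. - (\<Sum>i\<in>UNIV. \<mu> * Dx j (U i) q * V i q)) p)
  + (\<Sum>i\<in>UNIV. \<Sum>j\<in>UNIV. Dx j (\<lambda>q. \<mu> * Dx j (U i) q) p * V i p)"
  by (simp add: dsimps sm sum_3 algebra_simps)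

lemma pieceD: "R p * E2 p * (\<Sum>j\<in>UNIV. Dx j (\<lambda>q. S q * V j q) p) =
  (\<Sum>j\<in>UNIV. Dx j (\<lambda>q. R q * E2 q * S q * V j q) p) - (\<Sum>j\<in>UNIV. Dx j (\<lambda>q. R q * E2 q) p * S p * V j p)"
  by (simp add: dsimps sm sum_3 algebra_simps)

lemma three_ne: "(2::3) \<noteq> 1" "(3::3) \<noteq> 1" "(3::3) \<noteq> 2"
  by simp_all

definition "W1 q = Bm 2 q * V 3 q - V 2 q * Bm 3 q"
definition "W2 q = Bm 3 q * V 1 q - V 3 q * Bm 1 q"
definition "W3 q = Bm 1 q * V 2 q - V 1 q * Bm 2 q"
lemma sW: "smooth_fn W1" "smooth_fn W2" "smooth_fn W3"
  unfolding W1_def[abs_def] W2_def[abs_def] W3_def[abs_def] by (simp_all add: dsimps sm)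

definition cB :: "3 \<Rightarrow> pt \<Rightarrow> real" where "cB i p = (if i = 1 then Dx 2 (Bm 3) p - Dx 3 (Bm 2) p
   else if i = 2 then Dx 3 (Bm 1) p - Dx 1 (Bm 3) p else Dx 1 (Bm 2) p - Dx 2 (Bm 1) p)"
lemma cB_simps: "cB 1 p = Dx 2 (Bm 3) p - Dx 3 (Bm 2) p" "cB 2 p = Dx 3 (Bm 1) p - Dx 1 (Bm 3) p"
   "cB 3 p = Dx 1 (Bm 2) p - Dx 2 (Bm 1) p"
  by (simp_all add: cB_def three_ne)

lemma pieceE: "- (Bm 1 p * (- (Dx 2 W3 p - Dx 3 W2 p)) + Bm 2 p * (- (Dx 3 W1 p - Dx 1 W3 p)) + Bm 3 p * (- (Dx 1 W2 p - Dx 2 W1 p)))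
  = Dx 1 (\<lambda>q. W2 q * Bm 3 q - W3 q * Bm 2 q) p + Dx 2 (\<lambda>q. W3 q * Bm 1 q - W1 q * Bm 3 q) p
    + Dx 3 (\<lambda>q. W1 q * Bm 2 q - W2 q * Bm 1 q) p
    + (W1 p * cB 1 p + W2 p * cB 2 p + W3 p * cB 3 p)"
  by (simp add: dsimps sm sW cB_simps algebra_simps)

definition "Pr q = R q * (R q * E1 q + S q * E2 q)"
lemma sPr: "smooth_fn Pr"
  unfolding Pr_def[abs_def] by (simp add: dsimps sm)

definition BxC :: "3 \<Rightarrow> pt \<Rightarrow> real" where "BxC i p = (if i = 1 then Bm 2 p * cB 3 p - cB 2 p * Bm 3 p
   else if i = 2 then Bm 3 p * cB 1 p - cB 3 p * Bm 1 p else Bm 1 p * cB 2 p - cB 1 p * Bm 2 p)"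
lemma BxC_simps: "BxC 1 p = Bm 2 p * cB 3 p - cB 2 p * Bm 3 p" "BxC 2 p = Bm 3 p * cB 1 p - cB 3 p * Bm 1 p"
   "BxC 3 p = Bm 1 p * cB 2 p - cB 1 p * Bm 2 p"
  by (simp_all add: BxC_def three_ne)

definition Res :: "3 \<Rightarrow> pt \<Rightarrow> real" where "Res i p = R p * Dt (U i) p + R p * (\<Sum>j\<in>UNIV. U j p * Dx j (U i) p) + Dx i Pr p + BxC i p
   - (\<Sum>j\<in>UNIV. Dx j (\<lambda>q. \<mu> * Dx j (U i) q) p)"

lemma pieceF:
  assumes cont: "Dt R p = - (\<Sum>j\<in>UNIV. Dx j (\<lambda>q. R q * U j q) p)"
  shows "(\<Sum>j\<in>UNIV. R p * V j p * Dx j Phi p) - Dt R p * UV p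
  - (\<Sum>i\<in>UNIV. R p * Dt (U i) p * V i p)
  - (\<Sum>i\<in>UNIV. \<Sum>j\<in>UNIV. Dx j (\<lambda>q. R q * U j q * U i q) p * V i p)
  - (\<Sum>i\<in>UNIV. \<Sum>j\<in>UNIV. R p * U i p * V j p * Dx j (U i) p)
  + (\<Sum>i\<in>UNIV. \<Sum>j\<in>UNIV. Dx j (\<lambda>q. \<mu> * Dx j (U i) q) p * V i p)
  - (\<Sum>j\<in>UNIV. Dx j (\<lambda>q. R q * E2 q) p * S p * V j p)
  + (W1 p * cB 1 p + W2 p * cB 2 p + W3 p * cB 3 p)
  = - (\<Sum>i\<in>UNIV. Res i p * V i p)"
proof -
  have c2: "Dt R p = - (R p * Dx 1 (U 1) p + Dx 1 R p * U 1 p + (R p * Dx 2 (U 2) p + Dx 2 R p * U 2 p) + (R p * Dx 3 (U 3) p + Dx 3 R p * U 3 p))"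
    using cont by (simp add: dsimps sm sum_3)
  show ?thesis
    unfolding Res_def Phi_def[abs_def] Pr_def[abs_def] UV_def W1_def W2_def W3_def
    by (simp add: dsimps sm sum_3 chain c2 BxC_simps cB_simps algebra_simps add_divide_distrib)
qed

definition BF :: "3 \<Rightarrow> pt \<Rightarrow> real" where "BF j q = (if j = 1 then W2 q * Bm 3 q - W3 q * Bm 2 q
   else if j = 2 then W3 q * Bm 1 q - W1 q * Bm 3 q else W1 q * Bm 2 q - W2 q * Bm 1 q)"
lemma BF_simps: "BF 1 = (\<lambda>q. W2 q * Bm 3 q - W3 q * Bm 2 q)" "BF 2 = (\<lambda>q. W3 q * Bm 1 q - W1 q * Bm 3 q)"
  "BF 3 = (\<lambda>q. W1 q * Bm 2 q - W2 q * Bm 1 q)"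
  by (simp_all add: BF_def three_ne fun_eq_iff)

definition Fl :: "3 \<Rightarrow> pt \<Rightarrow> real" where
  "Fl j q = - (R q * V j q * Phi q) + R q * U j q * UV q + (- (\<Sum>i\<in>UNIV. \<mu> * Dx j (U i) q * V i q))
     + R q * E2 q * S q * V j q + BF j q"

lemma sBF: "smooth_fn (BF j)"
  using exhaust_3[of j] by (auto simp: BF_simps dsimps sm sW)

lemma sFl: "smooth_fn (Fl j)"
  unfolding Fl_def[abs_def] by (simp add: dsimps sm sPhi sUV sBF sum_3)

lemma Dx_Fl: "Dx j (Fl j) p = Dx j (\<lambda>q. - (R q * V j q * Phi q)) p + Dx j (\<lambda>q. R q * U j q * UV q) p
   + Dx j (\<lambda>q. - (\<Sum>i\<in>UNIV. \<mu> * Dx j (U i) q * V i q)) p + Dx j (\<lambda>q. R q * E2 q * S q * V j q) p + Dx j (BF j) p"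
proof -
  have s1: "smooth_fn (\<lambda>q. - (R q * V j q * Phi q))" "smooth_fn (\<lambda>q. R q * U j q * UV q)"
    "smooth_fn (\<lambda>q. - (\<Sum>i\<in>UNIV. \<mu> * Dx j (U i) q * V i q))" "smooth_fn (\<lambda>q. R q * E2 q * S q * V j q)"
    by (simp_all add: dsimps sm sPhi sUV sum_3)
  have "Fl j = (\<lambda>q. (((- (R q * V j q * Phi q) + R q * U j q * UV q) + (- (\<Sum>i\<in>UNIV. \<mu> * Dx j (U i) q * V i q)))
     + R q * E2 q * S q * V j q) + BF j q)"
    by (simp add: Fl_def[abs_def])
  then show ?thesis
    using s1 sBF by (simp only: Dx_add_s smooth_add)
qed

definition "I2 dss p = (- (\<Sum>j\<in>UNIV. Dx j (\<lambda>q. R q * V j q) p)) * Phi p + R p * (U 1 p * dU 1 p + U 2 p * dU 2 p + U 3 p * dU 3 p)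
  - \<mu> * (\<Sum>i\<in>UNIV. \<Sum>j\<in>UNIV. Dx j (U i) p * Dx j (V i) p) + R p * E2 p * (\<Sum>j\<in>UNIV. Dx j (\<lambda>q. S q * V j q) p)
  - (Bm 1 p * (- (Dx 2 W3 p - Dx 3 W2 p)) + Bm 2 p * (- (Dx 3 W1 p - Dx 1 W3 p)) + Bm 3 p * (- (Dx 1 W2 p - Dx 2 W1 p)))"

lemma master:
  assumes cont: "Dt R p = - (\<Sum>j\<in>UNIV. Dx j (\<lambda>q. R q * U j q) p)"
  shows "I2 dss p = - (\<Sum>i\<in>UNIV. Res i p * V i p) + Dt (\<lambda>q. R q * UV q) p + (\<Sum>j\<in>UNIV. Dx j (Fl j) p)"
proof -
  have A: "(- (\<Sum>j\<in>UNIV. Dx j (\<lambda>q. R q * V j q) p)) * Phi p =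
     (\<Sum>j\<in>UNIV. Dx j (\<lambda>q. - (R q * V j q * Phi q)) p) + (\<Sum>j\<in>UNIV. R p * V j p * Dx j Phi p)"
    using pieceA[of p] by (simp add: sum_3)
  have E: "- (Bm 1 p * (- (Dx 2 W3 p - Dx 3 W2 p)) + Bm 2 p * (- (Dx 3 W1 p - Dx 1 W3 p)) + Bm 3 p * (- (Dx 1 W2 p - Dx 2 W1 p)))
     = (\<Sum>j\<in>UNIV. Dx j (BF j) p) + (W1 p * cB 1 p + W2 p * cB 2 p + W3 p * cB 3 p)"
    using pieceE[of p] by (simp add: sum_3 BF_simps)
  have DF: "(\<Sum>j\<in>UNIV. Dx j (Fl j) p) = (\<Sum>j\<in>UNIV. Dx j (\<lambda>q. - (R q * V j q * Phi q)) p)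
     + (\<Sum>j\<in>UNIV. Dx j (\<lambda>q. R q * U j q * UV q) p) + (\<Sum>j\<in>UNIV. Dx j (\<lambda>q. - (\<Sum>i\<in>UNIV. \<mu> * Dx j (U i) q * V i q)) p)
     + (\<Sum>j\<in>UNIV. Dx j (\<lambda>q. R q * E2 q * S q * V j q) p) + (\<Sum>j\<in>UNIV. Dx j (BF j) p)"
    by (simp only: Dx_Fl sum.distrib)
  have C: "\<mu> * (\<Sum>i\<in>UNIV. \<Sum>j\<in>UNIV. Dx j (U i) p * Dx j (V i) p) =
    - ((\<Sum>j\<in>UNIV. Dx j (\<lambda>q. - (\<Sum>i\<in>UNIV. \<mu> * Dx j (U i) q * V i q)) p)
    + (\<Sum>i\<in>UNIV. \<Sum>j\<in>UNIV. Dx j (\<lambda>q. \<mu> * Dx j (U i) q) p * V i p))"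
    using pieceC[of p] by simp
  note B = pieceB[of p] and D = pieceD[of p] and F = pieceF[OF cont]
  show ?thesis
    unfolding I2_def using A B C D E F DF by linarith
qed

end


definition perx :: "(pt \<Rightarrow> real) \<Rightarrow> bool" where
  "perx F \<longleftrightarrow> (\<forall>q j. F (q + (0, axis j 1)) = F q)"

lemma perx_add: "perx F \<Longrightarrow> perx G \<Longrightarrow> perx (\<lambda>q. F q + G q)" by (simp add: perx_def)
lemma perx_diff: "perx F \<Longrightarrow> perx G \<Longrightarrow> perx (\<lambda>q. F q - G q)" by (simp add: perx_def)
lemma perx_mult: "perx F \<Longrightarrow> perx G \<Longrightarrow> perx (\<lambda>q. F q * G q)" by (simp add: perx_def)
lemma perx_minus: "perx F \<Longrightarrow> perx (\<lambda>q. - F q)" by (simp add: perx_def)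
lemma perx_divc: "perx F \<Longrightarrow> perx (\<lambda>q. F q / c)" by (simp add: perx_def)
lemma perx_const: "perx (\<lambda>q. c)" by (simp add: perx_def)
lemma perx_sum: "(\<And>i. perx (F i)) \<Longrightarrow> perx (\<lambda>q. \<Sum>i\<in>A. F i q)" by (simp add: perx_def)

lemma pd_translate:
  assumes d: "F differentiable (at (p + c))" and per: "\<And>q. F (q + c) = F q"
  shows "pd F b (p + c) = pd F b p"
proof -
  have i: "((\<lambda>q. q + c) has_derivative (\<lambda>h. h)) (at p)"
    by (auto intro!: derivative_eq_intros)
  have "((\<lambda>q. F (q + c)) has_derivative frechet_derivative F (at (p + c))) (at p)"
    using diff_chain_at[OF i d[unfolded frechet_derivative_works]] by (simp add: o_def)
  then have "(F has_derivative frechet_derivative F (at (p + c))) (at p)"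
    using per by simp
  then show ?thesis by (simp add: pd_def frechet_derivative_at[symmetric])
qed

lemma perx_Dx: "smooth_fn F \<Longrightarrow> perx F \<Longrightarrow> perx (Dx j F)"
  unfolding perx_def Dx_def using pd_translate smooth_diff by metis

lemmas persimps = perx_add perx_diff perx_mult perx_minus perx_divc perx_const perx_sum perx_Dx

lemma perx_slice: assumes "perx F" shows "F (t, x + axis j 1) = F (t, x)"
proof -
  have "(t, x + axis j 1) = (t, x) + (0, axis j 1)" by simp
  then show ?thesis using assms unfolding perx_def by metis
qed

context ident
begin

lemma sRes: "smooth_fn (Res i)"
proof -
  have "smooth_fn (cB k)" for k using exhaust_3[of k] by (auto simp: cB_def[abs_def] three_ne dsimps sm)
  then have "smooth_fn (BxC i)" using exhaust_3[of i] by (auto simp: BxC_def[abs_def] three_ne dsimps sm)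
  then show ?thesis unfolding Res_def[abs_def] by (simp add: dsimps sm sPr sum_3)
qed

lemma integral_I2:
  assumes perA: "perx R" "perx S" "\<And>i. perx (U i)" "\<And>i. perx (V i)" "\<And>i. perx (Bm i)" "perx E0" "perx E1" "perx E2"
    and vanish: "\<And>i x. V i (0, x) = 0" "\<And>i x. V i (Tf, x) = 0" and Tf: "0 \<le> Tf"
    and cont: "\<And>p. p \<in> K Tf \<Longrightarrow> Dt R p = - (\<Sum>j\<in>UNIV. Dx j (\<lambda>q. R q * U j q) p)"
  shows "integral (K Tf) (I2 dss) = - integral (K Tf) (\<lambda>p. \<Sum>i\<in>UNIV. Res i p * V i p)"
proof -
  have pPhi: "perx Phi" unfolding Phi_def[abs_def] by (simp add: persimps perA)
  have pUV: "perx UV" unfolding UV_def[abs_def] by (simp add: persimps perA)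
  have pW: "perx W1" "perx W2" "perx W3" unfolding W1_def[abs_def] W2_def[abs_def] W3_def[abs_def] by (simp_all add: persimps perA)
  have pBF: "perx (BF j)" for j using exhaust_3[of j] by (auto simp: BF_simps persimps perA pW)
  have pFl: "perx (Fl j)" for j unfolding Fl_def[abs_def] by (intro persimps perA pPhi pUV pBF sm)
  have sG: "smooth_fn (\<lambda>q. R q * UV q)" by (simp add: dsimps sm sUV)
  have sSum: "smooth_fn (\<lambda>p. \<Sum>i\<in>UNIV. Res i p * V i p)" by (simp add: dsimps sm sRes sum_3)
  have sDF: "smooth_fn (\<lambda>p. \<Sum>j\<in>UNIV. Dx j (Fl j) p)" by (simp add: dsimps sFl sum_3)
  have int: "f integrable_on K Tf" if "smooth_fn f" for f
    by (rule integrable_continuous[OF smooth_cont[OF that]])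
  have "integral (K Tf) (I2 dss) = integral (K Tf) (\<lambda>p. - (\<Sum>i\<in>UNIV. Res i p * V i p) + Dt (\<lambda>q. R q * UV q) p + (\<Sum>j\<in>UNIV. Dx j (Fl j) p))"
    by (rule integral_cong, rule master, erule cont)
  also have "\<dots> = - integral (K Tf) (\<lambda>p. \<Sum>i\<in>UNIV. Res i p * V i p) + integral (K Tf) (Dt (\<lambda>q. R q * UV q))
      + integral (K Tf) (\<lambda>p. \<Sum>j\<in>UNIV. Dx j (Fl j) p)"
  proof (rule integral_unique)
    have h1: "((\<lambda>p. \<Sum>i\<in>UNIV. Res i p * V i p) has_integral integral (K Tf) (\<lambda>p. \<Sum>i\<in>UNIV. Res i p * V i p)) (K Tf)"
      using int[OF sSum] by (rule integrable_integral)
    have h2: "(Dt (\<lambda>q. R q * UV q) has_integral integral (K Tf) (Dt (\<lambda>q. R q * UV q))) (K Tf)"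
      using int[OF smooth_Dt[OF sG]] by (rule integrable_integral)
    have h3: "((\<lambda>p. \<Sum>j\<in>UNIV. Dx j (Fl j) p) has_integral integral (K Tf) (\<lambda>p. \<Sum>j\<in>UNIV. Dx j (Fl j) p)) (K Tf)"
      using int[OF sDF] by (rule integrable_integral)
    show "((\<lambda>p. - (\<Sum>i\<in>UNIV. Res i p * V i p) + Dt (\<lambda>q. R q * UV q) p + (\<Sum>j\<in>UNIV. Dx j (Fl j) p)) has_integral
      - integral (K Tf) (\<lambda>p. \<Sum>i\<in>UNIV. Res i p * V i p) + integral (K Tf) (Dt (\<lambda>q. R q * UV q))
      + integral (K Tf) (\<lambda>p. \<Sum>j\<in>UNIV. Dx j (Fl j) p)) (K Tf)"
      by (intro has_integral_add has_integral_neg h1 h2 h3)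
  qed
  also have "integral (K Tf) (Dt (\<lambda>q. R q * UV q)) = 0"
    by (rule K_Dt_zero[OF sG _ _ Tf]) (simp_all add: UV_def vanish)
  also have "integral (K Tf) (\<lambda>p. \<Sum>j\<in>UNIV. Dx j (Fl j) p) = (\<Sum>j\<in>UNIV. integral (K Tf) (Dx j (Fl j)))"
    by (rule integral_sum) (auto intro: int smooth_Dx sFl)
  also have "\<dots> = 0"
    by (rule sum.neutral) (use K_Dx_zero sFl pFl perx_slice in blast)
  finally show ?thesis by simp
qed

end


definition cmp :: "vfield \<Rightarrow> 3 \<Rightarrow> pt \<Rightarrow> real" where "cmp w i = (\<lambda>p. w (fst p) (snd p) $ i)"
definition jn :: "sfield \<Rightarrow> pt \<Rightarrow> real" where "jn f = (\<lambda>p. f (fst p) (snd p))"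

lemma cmp_app[simp]: "cmp w i (t, x) = w t x $ i" by (simp add: cmp_def)
lemma jn_app[simp]: "jn f (t, x) = f t x" by (simp add: jn_def)

lemma pd_compose:
  fixes g :: "'b::euclidean_space \<Rightarrow> real" and F :: "'a::euclidean_space \<Rightarrow> 'b"
  assumes Fd: "F differentiable (at x)" and gd: "g differentiable (at (F x))"
  shows "pd (\<lambda>x. g (F x)) b x = (\<Sum>c\<in>Basis. pd (\<lambda>x. F x \<bullet> c) b x * pd g c (F x))"
proof -
  have dF: "(F has_derivative frechet_derivative F (at x)) (at x)"
    using Fd frechet_derivative_works by blast
  have dg: "(g has_derivative frechet_derivative g (at (F x))) (at (F x))"
    using gd frechet_derivative_works by blast
  have "pd (\<lambda>x. g (F x)) b x = frechet_derivative g (at (F x)) (frechet_derivative F (at x) b)"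
    using pd_eq[OF diff_chain_at[OF dF dg]] by (simp add: o_def)
  also have "\<dots> = pd g (frechet_derivative F (at x) b) (F x)" by (simp add: pd_def)
  also have "\<dots> = (\<Sum>c\<in>Basis. (frechet_derivative F (at x) b \<bullet> c) * pd g c (F x))"
    using gd pd_linear by blast
  also have "\<dots> = (\<Sum>c\<in>Basis. pd (\<lambda>x. F x \<bullet> c) b x * pd g c (F x))"
  proof (rule sum.cong[OF refl])
    fix c :: 'b
    have "((\<lambda>x. F x \<bullet> c) has_derivative (\<lambda>h. frechet_derivative F (at x) h \<bullet> c)) (at x)"
      using dF by (auto intro!: derivative_eq_intros)
    then show "(frechet_derivative F (at x) b \<bullet> c) * pd g c (F x) = pd (\<lambda>x. F x \<bullet> c) b x * pd g c (F x)"
      by (simp add: pd_eq)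
  qed
  finally show ?thesis .
qed

lemma Basis_rr: "(Basis :: (real \<times> real) set) = {(1, 0), (0, 1)}"
  by (auto simp: Basis_prod_def)

lemma pdx_conv: "(\<And>y. f y = F (t, y)) \<Longrightarrow> smooth_fn F \<Longrightarrow> pdx j f x = Dx j F (t, x)"
proof -
  assume "\<And>y. f y = F (t, y)" "smooth_fn F"
  then have "f = (\<lambda>y. F (t, y))" by auto
  then show ?thesis using pdx_Dx smooth_diff \<open>smooth_fn F\<close> by metis
qed

lemma smooth_vf_cmp: "smooth_vf w \<Longrightarrow> smooth_fn (cmp w i)"
  by (simp add: smooth_vf_def cmp_def)
lemma smooth_sf_jn: "smooth_sf f \<Longrightarrow> smooth_fn (jn f)"
  by (simp add: smooth_sf_def jn_def)

lemma perx_cmp: "(\<forall>t. periodic3 (w t)) \<Longrightarrow> perx (cmp w i)"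
  by (auto simp: perx_def periodic3_def cmp_def)
lemma perx_jn: "(\<forall>t. periodic3 (f t)) \<Longrightarrow> perx (jn f)"
  by (auto simp: perx_def periodic3_def jn_def)

locale mhd =
  fixes e :: "real \<Rightarrow> real \<Rightarrow> real" and \<mu> Tf :: real and u B :: vfield and \<rho> s :: sfield
  assumes mu: "\<mu> \<ge> 0" and Tf: "Tf > 0" and se: "smooth_fn (e2of e)"
    and hsu: "smooth_vf u" and hsr: "smooth_sf \<rho>" and hss: "smooth_sf s" and hsB: "smooth_vf B"
    and per: "\<forall>t. periodic3 (u t) \<and> periodic3 (\<rho> t) \<and> periodic3 (s t) \<and> periodic3 (B t)"
    and nz: "\<forall>t\<in>{0..Tf}. \<forall>x. dl_ds e (\<rho> t x) (s t x) \<noteq> 0"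
    and ceq: "\<forall>t\<in>{0..Tf}. \<forall>x. sdt \<rho> t x + dvg (\<lambda>y. \<rho> t y *\<^sub>R u t y) x = 0"
begin

definition "EE0 = (\<lambda>p. e2of e (jn \<rho> p, jn s p))"
definition "EE1 = (\<lambda>p. pd (e2of e) (1, 0) (jn \<rho> p, jn s p))"
definition "EE2 = (\<lambda>p. pd (e2of e) (0, 1) (jn \<rho> p, jn s p))"

lemma sRS: "smooth_fn (jn \<rho>)" "smooth_fn (jn s)"
  using hsr hss smooth_sf_jn by auto

lemma comp_sm: "smooth_fn g \<Longrightarrow> smooth_fn (\<lambda>p. g (jn \<rho> p, jn s p))"
  by (rule smooth_compose) (auto simp: Basis_rr sRS)

lemma sEE: "smooth_fn EE0" "smooth_fn EE1" "smooth_fn EE2"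
  unfolding EE0_def EE1_def EE2_def
  by (intro comp_sm se smooth_pd basis_10 basis_01)+

lemma chain: "Dx j EE0 p = EE1 p * Dx j (jn \<rho>) p + EE2 p * Dx j (jn s) p"
proof -
  have "Dx j EE0 p = (\<Sum>c\<in>Basis. pd (\<lambda>x. (jn \<rho> x, jn s x) \<bullet> c) (0, axis j 1) p * pd (e2of e) c (jn \<rho> p, jn s p))"
    unfolding Dx_def EE0_def
    by (rule pd_compose) (auto intro!: differentiable_Pair smooth_diff sRS se)
  also have "\<dots> = EE1 p * Dx j (jn \<rho>) p + EE2 p * Dx j (jn s) p"
    by (simp add: Basis_rr EE1_def EE2_def Dx_def)
  finally show ?thesis .
qed

lemma perEE: "perx EE0" "perx EE1" "perx EE2"
  using perx_jn[of \<rho>] perx_jn[of s] per unfolding EE0_def EE1_def EE2_def perx_def by auto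

end

locale mhdv = mhd +
  fixes v :: vfield
  assumes sv: "smooth_vf v" and pv: "\<forall>t. periodic3 (v t)"
begin

sublocale ident "jn \<rho>" "jn s" EE0 EE1 EE2 "cmp u" "cmp v" "cmp B" \<mu>
  by unfold_locales (auto intro: sRS sEE smooth_vf_cmp hsu sv hsB chain)

lemma smU: "smooth_fn (cmp u i)" "smooth_fn (cmp v i)" "smooth_fn (cmp B i)"
  using hsu sv hsB smooth_vf_cmp by auto

lemma conv_vdt: "smooth_vf w \<Longrightarrow> vdt w t x $ i = Dt (cmp w i) (t, x)"
  unfolding vdt_def using deriv_Dt[of "cmp w i" t x] smooth_diff[OF smooth_vf_cmp] by simp

lemma conv_sdt: "smooth_sf f \<Longrightarrow> sdt f t x = Dt (jn f) (t, x)"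
  unfolding sdt_def using deriv_Dt[of "jn f" t x] smooth_diff[OF smooth_sf_jn] by simp

lemma conv_pdx_cmp: "smooth_vf w \<Longrightarrow> pdx j (\<lambda>y. w t y $ i) x = Dx j (cmp w i) (t, x)"
  by (rule pdx_conv) (auto intro: smooth_vf_cmp)

lemma conv_adv: "smooth_vf w \<Longrightarrow> smooth_vf z \<Longrightarrow>
   adv (w t) (z t) x $ i = (\<Sum>j\<in>UNIV. cmp w j (t, x) * Dx j (cmp z i) (t, x))"
  unfolding adv_def by (simp add: conv_pdx_cmp)

lemma conv_dvg: "smooth_sf f \<Longrightarrow> smooth_vf w \<Longrightarrow>
   dvg (\<lambda>y. f t y *\<^sub>R w t y) x = (\<Sum>j\<in>UNIV. Dx j (\<lambda>q. jn f q * cmp w j q) (t, x))"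
  unfolding dvg_def
  by (rule sum.cong[OF refl], rule pdx_conv) (auto intro: smooth_mult smooth_vf_cmp smooth_sf_jn)

lemma conv_frob: "frob (u t) (v t) x = (\<Sum>i\<in>UNIV. \<Sum>j\<in>UNIV. Dx j (cmp u i) (t, x) * Dx j (cmp v i) (t, x))"
  unfolding frob_def using hsu sv by (simp add: conv_pdx_cmp)

lemma conv_curlB: "curl (B t) x $ k = cB k (t, x)"
  unfolding curl_def cB_def using hsB by (simp add: conv_pdx_cmp)

lemma conv_BxC: "cross3 (B t x) (curl (B t) x) $ i = BxC i (t, x)"
  using exhaust_3[of i] by (auto simp: cross_components conv_curlB BxC_simps)

lemma conv_curlW: "curl (\<lambda>y. cross3 (B t y) (v t y)) x $ i =
   (if i = 1 then Dx 2 W3 (t, x) - Dx 3 W2 (t, x) else if i = 2 then Dx 3 W1 (t, x) - Dx 1 W3 (t, x)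
    else Dx 1 W2 (t, x) - Dx 2 W1 (t, x))"
proof -
  have c: "pdx j (\<lambda>y. cross3 (B t y) (v t y) $ 1) x = Dx j W1 (t, x)"
          "pdx j (\<lambda>y. cross3 (B t y) (v t y) $ 2) x = Dx j W2 (t, x)"
          "pdx j (\<lambda>y. cross3 (B t y) (v t y) $ 3) x = Dx j W3 (t, x)" for j
    by (rule pdx_conv; simp add: cross_components W1_def W2_def W3_def sW)+
  show ?thesis unfolding curl_def by (simp add: c)
qed

lemma conv_visc: "visc \<mu> (u t) x $ i = (\<Sum>j\<in>UNIV. Dx j (\<lambda>q. \<mu> * Dx j (cmp u i) q) (t, x))"
proof -
  have "pdx j (\<lambda>y. \<mu> * pdx j (\<lambda>z. u t z $ i) y) x = Dx j (\<lambda>q. \<mu> * Dx j (cmp u i) q) (t, x)" for j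
    by (rule pdx_conv) (simp_all add: conv_pdx_cmp hsu dsimps smU)
  then show ?thesis unfolding visc_def by simp
qed

lemma conv_pressure: "pressure e \<rho> s t y = Pr (t, y)"
  unfolding pressure_def Pr_def
  using d_rho_pd[of e] d_s_pd[of e] smooth_diff[OF se] by (simp add: EE1_def EE2_def)

lemma conv_grad: "grad (pressure e \<rho> s t) x $ i = Dx i Pr (t, x)"
  unfolding grad_def by (simp add: pdx_conv conv_pressure sPr)

lemma conv_Res: "(\<rho> t x *\<^sub>R vdt u t x + \<rho> t x *\<^sub>R adv (u t) (u t) x + grad (pressure e \<rho> s t) x
         + cross3 (B t x) (curl (B t) x)) $ i - visc \<mu> (u t) x $ i = Res i (t, x)"
  unfolding Res_def using hsu by (simp add: conv_vdt conv_adv conv_grad conv_BxC conv_visc)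

lemma vec_cont: "(\<And>i. smooth_fn (\<lambda>p. f p $ i)) \<Longrightarrow> continuous_on S (f :: pt \<Rightarrow> real^3)"
proof -
  assume a: "\<And>i. smooth_fn (\<lambda>p. f p $ i)"
  have "continuous_on S (\<lambda>p. \<chi> i. f p $ i)"
    by (intro continuous_intros smooth_cont a)
  then show ?thesis by simp
qed

lemma sdU: "smooth_fn (dU i)"
  unfolding dU_def[abs_def] by (simp add: dsimps sm)

lemma dU_conv: "(vdt v t x + lie (u t) (v t) x) $ i = dU i (t, x)"
  unfolding lie_def dU_def using sv hsu by (simp add: conv_vdt conv_adv sum_3)

lemma dB_conv: "(- curl (\<lambda>y. cross3 (B t y) (v t y)) x) $ i =
   - (if i = 1 then Dx 2 W3 (t, x) - Dx 3 W2 (t, x) else if i = 2 then Dx 3 W1 (t, x) - Dx 1 W3 (t, x)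
    else Dx 1 W2 (t, x) - Dx 2 W1 (t, x))"
  by (simp add: conv_curlW)

lemma sq_norm3: "(norm (a :: real^3))\<^sup>2 = a$1 * a$1 + a$2 * a$2 + a$3 * a$3"
  by (simp add: power2_norm_eq_inner inner_vec_def sum_3)
lemma inner3: "(a :: real^3) \<bullet> b = a$1 * b$1 + a$2 * b$2 + a$3 * b$3"
  by (simp add: inner_vec_def sum_3)

lemma conv_LagD:
  assumes constr: "dl_ds e (\<rho> t x) (s t x) * (ds + dvg (\<lambda>y. s t y *\<^sub>R v t y) x) = - \<mu> * frob (u t) (v t) x"
  shows "LagD e (u t x) (vdt v t x + lie (u t) (v t) x) (\<rho> t x) (- dvg (\<lambda>y. \<rho> t y *\<^sub>R v t y) x) (s t x) ds
           (B t x) (- curl (\<lambda>y. cross3 (B t y) (v t y)) x) 0 = I2 dss (t, x)"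
proof -
  let ?p = "(t, x)"
  have dl: "dl_ds e (\<rho> t x) (s t x) = - jn \<rho> ?p * EE2 ?p"
    using d_s_pd[of e] smooth_diff[OF se] by (simp add: dl_ds_def EE2_def)
  have c2: "jn \<rho> ?p * EE2 ?p * ds = \<mu> * (\<Sum>i\<in>UNIV. \<Sum>j\<in>UNIV. Dx j (cmp u i) ?p * Dx j (cmp v i) ?p)
      - jn \<rho> ?p * EE2 ?p * (\<Sum>j\<in>UNIV. Dx j (\<lambda>q. jn s q * cmp v j q) ?p)"
    using constr unfolding dl conv_frob conv_dvg[OF hss sv] by (simp add: algebra_simps)
  have E0: "e (\<rho> t x) (s t x) = EE0 ?p" by (simp add: EE0_def e2of_def)
  have E1: "pd (e2of e) (1, 0) (\<rho> t x, s t x) = EE1 ?p" by (simp add: EE1_def)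
  have E2: "pd (e2of e) (0, 1) (\<rho> t x, s t x) = EE2 ?p" by (simp add: EE2_def)
  have dr: "- dvg (\<lambda>y. \<rho> t y *\<^sub>R v t y) x = - (\<Sum>j\<in>UNIV. Dx j (\<lambda>q. jn \<rho> q * cmp v j q) ?p)"
    using conv_dvg[OF hsr sv] by simp
  have ud: "u t x \<bullet> (vdt v t x + lie (u t) (v t) x) = cmp u 1 ?p * dU 1 ?p + cmp u 2 ?p * dU 2 ?p + cmp u 3 ?p * dU 3 ?p"
    unfolding inner3 dU_conv by simp
  have bd: "B t x \<bullet> (- curl (\<lambda>y. cross3 (B t y) (v t y)) x) =
     cmp B 1 ?p * (- (Dx 2 W3 ?p - Dx 3 W2 ?p)) + cmp B 2 ?p * (- (Dx 3 W1 ?p - Dx 1 W3 ?p)) + cmp B 3 ?p * (- (Dx 1 W2 ?p - Dx 2 W1 ?p))"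
    unfolding inner3 dB_conv by (simp add: three_ne)
  have nu: "(norm (u t x))\<^sup>2 = cmp u 1 ?p * cmp u 1 ?p + cmp u 2 ?p * cmp u 2 ?p + cmp u 3 ?p * cmp u 3 ?p"
    by (simp add: sq_norm3)
  show ?thesis
    unfolding LagD_def I2_def Phi_def
    apply (simp only: E0 E1 E2 dr ud bd nu mult_zero_left mult_zero_right add_0_right add_0_left power_zero_numeral)
    using c2 by (simp add: field_simps)
qed

lemma K_fst: "p \<in> K Tf \<Longrightarrow> fst p \<in> {0..Tf}"
  by (cases p) (simp add: cbox_Pair_eq cbox_interval)

lemma smooth_dB: "smooth_fn (\<lambda>p. - (if i = 1 then Dx 2 W3 p - Dx 3 W2 p else if i = 2 then Dx 3 W1 p - Dx 1 W3 p
    else Dx 1 W2 p - Dx 2 W1 p))" for i :: 3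
  using exhaust_3[of i] by (auto simp: three_ne dsimps sW)

lemma deriv_action:
  assumes vanish: "\<forall>x. v 0 x = 0 \<and> v Tf x = 0"
    and constr: "\<forall>t\<in>{0..Tf}. \<forall>x. dl_ds e (\<rho> t x) (s t x) * (\<delta>s t x + dvg (\<lambda>y. s t y *\<^sub>R v t y) x) = - \<mu> * frob (u t) (v t) x"
  shows "((\<lambda>\<epsilon>. action e Tf (\<lambda>t x. u t x + \<epsilon> *\<^sub>R (vdt v t x + lie (u t) (v t) x))
             (\<lambda>t x. \<rho> t x + \<epsilon> * - dvg (\<lambda>y. \<rho> t y *\<^sub>R v t y) x) (\<lambda>t x. s t x + \<epsilon> * \<delta>s t x)
             (\<lambda>t x. B t x + \<epsilon> *\<^sub>R - curl (\<lambda>y. cross3 (B t y) (v t y)) x))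
         has_real_derivative - integral (K Tf) (\<lambda>p. \<Sum>i\<in>UNIV. Res i p * cmp v i p)) (at 0)"
proof -
  have cu: "continuous_on UNIV (\<lambda>p. u (fst p) (snd p))"
    by (rule vec_cont) (simp add: smU(1)[unfolded cmp_def])
  have cB: "continuous_on UNIV (\<lambda>p. B (fst p) (snd p))"
    by (rule vec_cont) (simp add: smU(3)[unfolded cmp_def])
  have cdu: "continuous_on UNIV (\<lambda>p. vdt v (fst p) (snd p) + lie (u (fst p)) (v (fst p)) (snd p))"
  proof (rule vec_cont)
    fix i
    have "(\<lambda>p. (vdt v (fst p) (snd p) + lie (u (fst p)) (v (fst p)) (snd p)) $ i) = dU i"
      using dU_conv by (auto simp: fun_eq_iff)
    then show "smooth_fn (\<lambda>p. (vdt v (fst p) (snd p) + lie (u (fst p)) (v (fst p)) (snd p)) $ i)"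
      using sdU by simp
  qed
  have cdB: "continuous_on UNIV (\<lambda>p. - curl (\<lambda>y. cross3 (B (fst p) y) (v (fst p) y)) (snd p))"
  proof (rule vec_cont)
    fix i
    have "(\<lambda>p. (- curl (\<lambda>y. cross3 (B (fst p) y) (v (fst p) y)) (snd p)) $ i) =
       (\<lambda>p. - (if i = 1 then Dx 2 W3 p - Dx 3 W2 p else if i = 2 then Dx 3 W1 p - Dx 1 W3 p
    else Dx 1 W2 p - Dx 2 W1 p))"
      using dB_conv by (auto simp: fun_eq_iff)
    then show "smooth_fn (\<lambda>p. (- curl (\<lambda>y. cross3 (B (fst p) y) (v (fst p) y)) (snd p)) $ i)"
      using smooth_dB by simp
  qed
  have cr: "continuous_on UNIV (\<lambda>p. \<rho> (fst p) (snd p))" "continuous_on UNIV (\<lambda>p. s (fst p) (snd p))"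
    using smooth_cont sRS unfolding jn_def by blast+
  have cdr: "continuous_on UNIV (\<lambda>p. - dvg (\<lambda>y. \<rho> (fst p) y *\<^sub>R v (fst p) y) (snd p))"
  proof -
    have eq: "(\<lambda>p. - dvg (\<lambda>y. \<rho> (fst p) y *\<^sub>R v (fst p) y) (snd p)) = (\<lambda>p. - (\<Sum>j\<in>UNIV. Dx j (\<lambda>q. jn \<rho> q * cmp v j q) p))"
      using conv_dvg[OF hsr sv] by (auto simp: fun_eq_iff)
    have sm': "smooth_fn (\<lambda>p. - (\<Sum>j\<in>UNIV. Dx j (\<lambda>q. jn \<rho> q * cmp v j q) p))"
      by (simp add: dsimps sm sum_3)
    show ?thesis unfolding eq by (rule smooth_cont[OF sm'])
  qed
  have cds: "continuous_on (K Tf) (\<lambda>p. \<delta>s (fst p) (snd p))"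
  proof -
    have eq: "\<delta>s (fst p) (snd p) = (- \<mu> * (\<Sum>i\<in>UNIV. \<Sum>j\<in>UNIV. Dx j (cmp u i) p * Dx j (cmp v i) p)) / (- jn \<rho> p * EE2 p)
        - (\<Sum>j\<in>UNIV. Dx j (\<lambda>q. jn s q * cmp v j q) p)" if "p \<in> K Tf" for p
    proof -
      obtain t x where p: "p = (t, x)" by (cases p)
      have t: "t \<in> {0..Tf}" using K_fst[OF that] p by simp
      have dl: "dl_ds e (\<rho> t x) (s t x) = - jn \<rho> p * EE2 p"
        using d_s_pd[of e] smooth_diff[OF se] p by (simp add: dl_ds_def EE2_def)
      have nz': "- jn \<rho> p * EE2 p \<noteq> 0" using nz t dl by metis
      have "(- jn \<rho> p * EE2 p) * (\<delta>s t x + (\<Sum>j\<in>UNIV. Dx j (\<lambda>q. jn s q * cmp v j q) p)) =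
          - \<mu> * (\<Sum>i\<in>UNIV. \<Sum>j\<in>UNIV. Dx j (cmp u i) p * Dx j (cmp v i) p)"
      proof -
        have c: "dl_ds e (\<rho> t x) (s t x) * (\<delta>s t x + dvg (\<lambda>y. s t y *\<^sub>R v t y) x) = - \<mu> * frob (u t) (v t) x"
          using constr t by blast
        show ?thesis using c unfolding dl conv_frob conv_dvg[OF hss sv] p by simp
      qed
      then show ?thesis using nz' p by (simp add: field_simps)
    qed
    have "continuous_on (K Tf) (\<lambda>p. (- \<mu> * (\<Sum>i\<in>UNIV. \<Sum>j\<in>UNIV. Dx j (cmp u i) p * Dx j (cmp v i) p)) / (- jn \<rho> p * EE2 p)
        - (\<Sum>j\<in>UNIV. Dx j (\<lambda>q. jn s q * cmp v j q) p))"
    proof -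
      have s1: "smooth_fn (\<lambda>p. - \<mu> * (\<Sum>i\<in>UNIV. \<Sum>j\<in>UNIV. Dx j (cmp u i) p * Dx j (cmp v i) p))"
        by (simp add: dsimps sm sum_3)
      have s2: "smooth_fn (\<lambda>p. - jn \<rho> p * EE2 p)" by (simp add: dsimps sm)
      have s3: "smooth_fn (\<lambda>p. \<Sum>j\<in>UNIV. Dx j (\<lambda>q. jn s q * cmp v j q) p)" by (simp add: dsimps sm sum_3)
      have nz2: "\<forall>p\<in>K Tf. - jn \<rho> p * EE2 p \<noteq> 0"
      proof
        fix p assume "p \<in> K Tf"
        then obtain t x where p: "p = (t, x)" "t \<in> {0..Tf}" using K_fst by (cases p) fastforce
        have dl: "dl_ds e (\<rho> t x) (s t x) = - jn \<rho> p * EE2 p"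
          using d_s_pd[of e] smooth_diff[OF se] p by (simp add: dl_ds_def EE2_def)
        show "- jn \<rho> p * EE2 p \<noteq> 0" using nz p dl by metis
      qed
      show ?thesis
        by (rule continuous_on_diff[OF continuous_on_divide[OF smooth_cont[OF s1] smooth_cont[OF s2] nz2] smooth_cont[OF s3]])
    qed
    then show ?thesis by (rule continuous_on_eq) (rule eq[symmetric])
  qed
  note D = action_deriv[OF se cu cdu cB cdB cr(1) cdr cr(2) cds, unfolded fst_conv snd_conv]
  have cont: "Dt (jn \<rho>) p = - (\<Sum>j\<in>UNIV. Dx j (\<lambda>q. jn \<rho> q * cmp u j q) p)" if "p \<in> K Tf" for p
  proof -
    obtain t x where p0: "p = (t, x)" by (cases p)
    have p: "p = (t, x)" "t \<in> {0..Tf}" using K_fst[OF that] p0 by auto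
    have "sdt \<rho> t x + dvg (\<lambda>y. \<rho> t y *\<^sub>R u t y) x = 0" using ceq p by blast
    then show ?thesis unfolding conv_sdt[OF hsr] conv_dvg[OF hsr hsu] p by simp
  qed
  have I: "integral (K Tf) (I2 \<delta>s) = - integral (K Tf) (\<lambda>p. \<Sum>i\<in>UNIV. Res i p * cmp v i p)"
  proof (rule integral_I2)
    show "perx (jn \<rho>)" "perx (jn s)" "perx (cmp u i)" "perx (cmp v i)" "perx (cmp B i)" for i
      using per pv by (auto intro: perx_jn perx_cmp)
    show "perx EE0" "perx EE1" "perx EE2" by (rule perEE)+
    show "cmp v i (0, x) = 0" "cmp v i (Tf, x) = 0" for i x using vanish by auto
    show "0 \<le> Tf" using Tf by simp
  qed (rule cont)
  show ?thesis
    apply (rule DERIV_cong[OF D])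
    unfolding I[symmetric]
    apply (rule integral_cong)
    subgoal for p
      apply (cases p)
      apply (simp only: fst_conv snd_conv)
      apply (rule conv_LagD)
      using constr K_fst by force
    done
qed

end


lemma sin_shift_int: "\<bar>sin (pi * (w + of_int k))\<bar> = \<bar>sin (pi * w)\<bar>"
proof -
  have "sin (pi * (w + of_int k)) = sin (pi * w) * cos (pi * of_int k) + cos (pi * w) * sin (pi * of_int k)"
    by (simp add: distrib_left sin_add)
  then show ?thesis by (simp add: abs_mult)
qed

lemma abs_sin_pi: "\<bar>w\<bar> \<le> 1 \<Longrightarrow> \<bar>sin (pi * w)\<bar> = sin (pi * \<bar>w\<bar>)"
proof (cases "w \<ge> 0")
  case True
  assume "\<bar>w\<bar> \<le> 1"
  then have w: "w \<le> 1" by auto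
  have "pi * w \<le> pi * 1" using mult_left_mono[OF w, of pi] by simp
  then have "0 \<le> sin (pi * w)" using True by (intro sin_ge_zero) auto
  then show ?thesis using True by simp
next
  case False
  assume "\<bar>w\<bar> \<le> 1"
  then have w: "0 \<le> - w" "- w \<le> 1" using False by auto
  have "pi * (- w) \<le> pi * 1" using mult_left_mono[OF w(2), of pi] by simp
  moreover have "0 \<le> pi * (- w)" using w(1) by (intro mult_nonneg_nonneg) auto
  ultimately have "0 \<le> sin (pi * (- w))" by (intro sin_ge_zero) auto
  then show ?thesis using False by simp
qed

lemma sin_near_int:
  assumes "0 < \<eta>" "\<eta> \<le> 1/2" "\<bar>sin (pi * w)\<bar> < sin (pi * \<eta>)"
  shows "\<exists>k::int. \<bar>w - of_int k\<bar> < \<eta>"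
proof (rule ccontr)
  assume "\<not> ?thesis"
  then have ge: "\<bar>w - of_int (round w)\<bar> \<ge> \<eta>" by (meson not_less)
  define w' where "w' = w - of_int (round w)"
  have w'le: "\<bar>w'\<bar> \<le> 1/2" unfolding w'_def using of_int_round_abs_le[of w] by linarith
  have "\<bar>sin (pi * w)\<bar> = \<bar>sin (pi * w')\<bar>"
    using sin_shift_int[of w' "round w"] by (simp add: w'_def)
  also have "\<dots> = sin (pi * \<bar>w'\<bar>)" using w'le by (intro abs_sin_pi) auto
  also have "\<dots> \<ge> sin (pi * \<eta>)"
  proof (rule sin_monotone_2pi_le)
    show "- (pi / 2) \<le> pi * \<eta>" using mult_pos_pos[OF pi_gt_zero assms(1)] pi_gt_zero by linarith
    show "pi * \<eta> \<le> pi * \<bar>w'\<bar>" using ge by (simp add: w'_def)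
    show "pi * \<bar>w'\<bar> \<le> pi / 2" using mult_left_mono[OF w'le, of pi] by simp
  qed
  finally show False using assms(3) by simp
qed

lemma abs_div_less1: "0 < (b::real) \<Longrightarrow> \<bar>a / b\<bar> < 1 \<longleftrightarrow> \<bar>a\<bar> < b"
  by simp

definition gam :: "real \<Rightarrow> real \<Rightarrow> real \<Rightarrow> real" where
  "gam c \<eta> y = bump (sin (pi * (y - c)) / sin (pi * \<eta>))"

definition phi :: "real \<Rightarrow> real \<Rightarrow> real^3 \<Rightarrow> pt \<Rightarrow> real" where
  "phi t1 \<eta> c p = bump ((fst p - t1) / \<eta>) * (\<Prod>j\<in>UNIV. gam (c$j) \<eta> (snd p $ j))"

lemma gam_per: "gam c \<eta> (y + 1) = gam c \<eta> y"
proof -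
  have e: "pi * (y + 1 - c) = pi * (y - c) + pi" by (simp add: algebra_simps)
  have "sin (pi * (y + 1 - c)) = - sin (pi * (y - c))"
    unfolding e by (rule sin_periodic_pi)
  then show ?thesis unfolding gam_def using bump_even by (metis minus_divide_left)
qed

lemma gam_nonneg: "gam c \<eta> y \<ge> 0" by (simp add: gam_def bump_nonneg)
lemma phi_nonneg: "phi t1 \<eta> c p \<ge> 0" by (simp add: phi_def bump_nonneg gam_nonneg prod_nonneg)

lemma gam_pos: assumes "0 < \<eta>" "\<eta> < 1" "gam c \<eta> y \<noteq> 0"
  shows "\<bar>sin (pi * (y - c))\<bar> < sin (pi * \<eta>)"
proof -
  have sp: "sin (pi * \<eta>) > 0" using assms by (intro sin_gt_zero) auto
  have "gam c \<eta> y > 0" using assms(3) gam_nonneg by (metis less_eq_real_def)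
  then have "\<bar>sin (pi * (y - c)) / sin (pi * \<eta>)\<bar> < 1" unfolding gam_def bump_pos_iff .
  then show ?thesis using abs_div_less1[OF sp] by blast
qed

lemma phi_pos: assumes "0 < \<eta>" "\<eta> < 1" "phi t1 \<eta> c p \<noteq> 0"
  shows "\<bar>fst p - t1\<bar> < \<eta>" "\<And>j. \<bar>sin (pi * (snd p $ j - c $ j))\<bar> < sin (pi * \<eta>)"
proof -
  have b: "bump ((fst p - t1) / \<eta>) \<noteq> 0" and g: "\<And>j. gam (c$j) \<eta> (snd p $ j) \<noteq> 0"
    using assms(3) by (auto simp: phi_def)
  have "bump ((fst p - t1) / \<eta>) > 0" using b bump_nonneg by (metis less_eq_real_def)
  then have "\<bar>(fst p - t1) / \<eta>\<bar> < 1" by (simp add: bump_pos_iff)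
  then show "\<bar>fst p - t1\<bar> < \<eta>" using abs_div_less1[OF assms(1)] by blast
  show "\<bar>sin (pi * (snd p $ j - c $ j))\<bar> < sin (pi * \<eta>)" for j using gam_pos[OF assms(1,2) g] .
qed

lemma phi_center: "phi t1 \<eta> c (t1, c) > 0"
proof -
  have "bump 0 > 0" by (simp add: bump_pos_iff)
  then show ?thesis by (simp add: phi_def gam_def prod_pos)
qed

lemma phi_per: "phi t1 \<eta> c (t, x + axis j 1) = phi t1 \<eta> c (t, x)"
proof -
  have "gam (c$k) \<eta> ((x + axis j 1) $ k) = gam (c$k) \<eta> (x $ k)" for k
    by (cases "k = j") (simp_all add: axis_def gam_per)
  then show ?thesis by (simp add: phi_def)
qed

lemma phi_time0: "\<bar>t - t1\<bar> \<ge> \<eta> \<Longrightarrow> 0 < \<eta> \<Longrightarrow> phi t1 \<eta> c (t, x) = 0"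
proof -
  assume a: "\<bar>t - t1\<bar> \<ge> \<eta>" "0 < \<eta>"
  then have "\<not> \<bar>(t - t1) / \<eta>\<bar> < 1" using abs_div_less1[OF a(2), of "t - t1"] by linarith
  then have "bump ((t - t1) / \<eta>) = 0" using bump_nonneg bump_pos_iff by (metis less_eq_real_def)
  then show ?thesis by (simp add: phi_def)
qed

lemma smooth_phi: "smooth_fn (phi t1 \<eta> c)"
proof -
  have l1: "smooth_fn (\<lambda>p::pt. (fst p - t1) / \<eta>)"
    by (intro smooth_divc smooth_diff_fn smooth_linear bounded_linear_fst smooth_const)
  have l2: "smooth_fn (\<lambda>p::pt. sin (pi * (snd p $ j - c $ j)) / sin (pi * \<eta>))" for j
  proof -
    have "smooth_fn (\<lambda>p::pt. pi * (snd p $ j - c $ j))"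
      by (intro smooth_mult smooth_const smooth_diff_fn smooth_linear bounded_linear_compose[OF bounded_linear_vec_nth bounded_linear_snd])
    then show ?thesis by (intro smooth_divc smooth_compose_real[OF smooth_sin])
  qed
  have "smooth_fn (\<lambda>p::pt. bump ((fst p - t1) / \<eta>) * (\<Prod>j\<in>UNIV. gam (c$j) \<eta> (snd p $ j)))"
    unfolding gam_def
    by (intro smooth_mult smooth_prod smooth_compose_real[OF smooth_bump] l1 l2) auto
  then show ?thesis by (simp add: phi_def[abs_def])
qed


lemma perx_Dt: "smooth_fn F \<Longrightarrow> perx F \<Longrightarrow> perx (Dt F)"
  unfolding perx_def Dt_def using pd_translate smooth_diff by metis

context ident
begin
lemma perRes:
  assumes perA: "perx R" "perx S" "\<And>i. perx (U i)" "\<And>i. perx (Bm i)" "perx E1" "perx E2"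
  shows "perx (Res i)"
proof -
  have pcB: "perx (cB k)" for k
    using exhaust_3[of k] by (auto simp: cB_def[abs_def] three_ne persimps perA sm)
  have pBxC: "perx (BxC i)" for i
    using exhaust_3[of i] by (auto simp: BxC_def[abs_def] three_ne persimps perA pcB)
  have pPr: "perx Pr" unfolding Pr_def[abs_def] by (intro persimps perA)
  show ?thesis unfolding Res_def[abs_def]
    by (intro persimps perx_Dt perA pBxC pPr sm smooth_Dx smooth_mult smooth_const sPr)
qed
end

lemma pos_nbhd: fixes f :: "pt \<Rightarrow> real" assumes "isCont f a" "0 < f a"
  shows "\<exists>d>0. \<forall>x. dist x a < d \<longrightarrow> 0 < f x"
proof -
  have "(f \<longlongrightarrow> f a) (nhds a)" using assms(1) tendsto_at_iff_tendsto_nhds isCont_def by blast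
  then have "eventually (\<lambda>x. 0 < f x) (nhds a)" using assms(2) order_tendstoD(1) by blast
  then show ?thesis unfolding eventually_nhds_metric by blast
qed

lemma dist_pt_le: "dist (a::pt) b \<le> \<bar>fst a - fst b\<bar> + (\<Sum>j\<in>UNIV. \<bar>snd a $ j - snd b $ j\<bar>)"
proof -
  have "dist a b = norm (fst a - fst b, snd a - snd b)" by (cases a; cases b) (simp add: dist_norm)
  also have "\<dots> \<le> norm (fst a - fst b) + norm (snd a - snd b)" by (rule norm_Pair_le)
  also have "norm (snd a - snd b) \<le> (\<Sum>j\<in>UNIV. \<bar>snd a $ j - snd b $ j\<bar>)"
    using norm_le_l1_cart[of "snd a - snd b"] by simp
  finally show ?thesis by simp
qed

lemma perx_nat: "perx F \<Longrightarrow> F (t, x + real n *\<^sub>R axis j 1) = F (t, x)"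
proof (induction n arbitrary: x)
  case 0 then show ?case by simp
next
  case (Suc n)
  have eq: "x + real (Suc n) *\<^sub>R axis j 1 = (x + real n *\<^sub>R axis j 1) + axis j 1" by (simp add: algebra_simps)
  show ?case unfolding eq by (rule trans[OF perx_slice[OF Suc.prems] Suc.IH[OF Suc.prems]])
qed

lemma perx_int: assumes "perx F" shows "F (t, x + of_int k *\<^sub>R axis j 1) = F (t, x)"
proof (cases "k \<ge> 0")
  case True
  then have e: "(of_int k :: real) = real (nat k)" by simp
  show ?thesis unfolding e by (rule perx_nat[OF assms])
next
  case False
  then have e: "(of_int k :: real) = - real (nat (- k))" by simp
  define y where "y = x - real (nat (- k)) *\<^sub>R axis j 1"
  have "F (t, y + real (nat (- k)) *\<^sub>R axis j 1) = F (t, y)" by (rule perx_nat[OF assms])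
  moreover have "y + real (nat (- k)) *\<^sub>R axis j 1 = x" unfolding y_def by simp
  moreover have "x + of_int k *\<^sub>R axis j 1 = y" unfolding y_def e by (simp add: algebra_simps)
  ultimately show ?thesis by simp
qed

lemma perx_vec: assumes "perx F" shows "F (t, x + (\<chi> j. of_int (k j))) = F (t, x)"
proof -
  have eq: "x + (\<chi> j. of_int (k j)) = ((x + of_int (k 1) *\<^sub>R axis 1 1) + of_int (k 2) *\<^sub>R axis 2 1) + of_int (k 3) *\<^sub>R axis 3 1"
  proof -
    have "(x + (\<chi> j. of_int (k j))) $ i = (((x + of_int (k 1) *\<^sub>R axis 1 1) + of_int (k 2) *\<^sub>R axis 2 1) + of_int (k 3) *\<^sub>R axis 3 1) $ i" for i
      using exhaust_3[of i] by (elim disjE) (simp_all add: axis_def)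
    then show ?thesis using vec_eq_iff by blast
  qed
  show ?thesis unfolding eq by (simp only: perx_int[OF assms])
qed

context mhd
begin

definition ResM :: "3 \<Rightarrow> pt \<Rightarrow> real" where
  "ResM i p = (\<rho> (fst p) (snd p) *\<^sub>R vdt u (fst p) (snd p) + \<rho> (fst p) (snd p) *\<^sub>R adv (u (fst p)) (u (fst p)) (snd p)
      + grad (pressure e \<rho> s (fst p)) (snd p) + cross3 (B (fst p) (snd p)) (curl (B (fst p)) (snd p))) $ i
      - visc \<mu> (u (fst p)) (snd p) $ i"

lemma smooth_vf_zero: "smooth_vf (\<lambda>t x. 0)" by (simp add: smooth_vf_def smooth_const)

lemma mhdv_zero: "mhdv e \<mu> Tf u B \<rho> s (\<lambda>t x. 0)"
  by (unfold_locales) (auto simp: smooth_vf_zero periodic3_def)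

lemma ResM_Res: assumes "mhdv e \<mu> Tf u B \<rho> s v"
  shows "ResM i = ident.Res (jn \<rho>) (jn s) EE1 EE2 (cmp u) (cmp B) \<mu> i"
proof -
  interpret mhdv e \<mu> Tf u B \<rho> s v by (rule assms)
  show ?thesis
  proof
    fix p :: pt
    show "ResM i p = Res i p" using conv_Res[of "fst p" "snd p" i] by (simp add: ResM_def)
  qed
qed

lemma rev_dir:
  assumes eqn: "\<forall>t\<in>{0..Tf}. \<forall>x. \<rho> t x *\<^sub>R vdt u t x + \<rho> t x *\<^sub>R adv (u t) (u t) x + grad (pressure e \<rho> s t) x
         + cross3 (B t x) (curl (B t) x) = visc \<mu> (u t) x"
  shows "extremal e \<mu> Tf u \<rho> s B"
  unfolding extremal_def Let_def
proof (intro allI impI)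
  fix v :: vfield and \<delta>s :: sfield
  assume H: "smooth_vf v \<and> (\<forall>t. periodic3 (v t)) \<and> (\<forall>x. v 0 x = 0 \<and> v Tf x = 0) \<and>
       (\<forall>t\<in>{0..Tf}. \<forall>x. dl_ds e (\<rho> t x) (s t x) * (\<delta>s t x + dvg (\<lambda>y. s t y *\<^sub>R v t y) x) = - \<mu> * frob (u t) (v t) x)"
  have mv: "mhdv e \<mu> Tf u B \<rho> s v" by unfold_locales (use H in auto)
  interpret mhdv e \<mu> Tf u B \<rho> s v by (rule mv)
  have D: "((\<lambda>\<epsilon>. action e Tf (\<lambda>t x. u t x + \<epsilon> *\<^sub>R (vdt v t x + lie (u t) (v t) x))
             (\<lambda>t x. \<rho> t x + \<epsilon> * - dvg (\<lambda>y. \<rho> t y *\<^sub>R v t y) x) (\<lambda>t x. s t x + \<epsilon> * \<delta>s t x)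
             (\<lambda>t x. B t x + \<epsilon> *\<^sub>R - curl (\<lambda>y. cross3 (B t y) (v t y)) x))
         has_real_derivative - integral (K Tf) (\<lambda>p. \<Sum>i\<in>UNIV. Res i p * cmp v i p)) (at 0)"
    by (rule deriv_action) (use H in auto)
  have Z: "integral (K Tf) (\<lambda>p. \<Sum>i\<in>UNIV. Res i p * cmp v i p) = integral (K Tf) (\<lambda>p. 0)"
  proof (rule integral_cong)
    fix p assume "p \<in> K Tf"
    then have t: "fst p \<in> {0..Tf}" by (rule K_fst)
    have "Res i p = 0" for i
    proof -
      have "ResM i p = 0" using eqn t unfolding ResM_def by simp
      then show ?thesis using ResM_Res[OF mv] by simp
    qed
    then show "(\<Sum>i\<in>UNIV. Res i p * cmp v i p) = 0" by simp
  qed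
  show "((\<lambda>\<epsilon>. action e Tf (\<lambda>t x. u t x + \<epsilon> *\<^sub>R (vdt v t x + lie (u t) (v t) x))
             (\<lambda>t x. \<rho> t x + \<epsilon> * - dvg (\<lambda>y. \<rho> t y *\<^sub>R v t y) x) (\<lambda>t x. s t x + \<epsilon> * \<delta>s t x)
             (\<lambda>t x. B t x + \<epsilon> *\<^sub>R - curl (\<lambda>y. cross3 (B t y) (v t y)) x))
         has_real_derivative 0) (at 0)"
    using D unfolding Z by simp
qed

lemma sResM: "smooth_fn (ResM i)" and pResM: "perx (ResM i)"
proof -
  interpret z: mhdv e \<mu> Tf u B \<rho> s "\<lambda>t x. 0" by (rule mhdv_zero)
  have eq: "ResM i = z.Res i" by (rule ResM_Res[OF mhdv_zero])
  show "smooth_fn (ResM i)" unfolding eq by (rule z.sRes)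
  show "perx (ResM i)" unfolding eq
    by (rule z.perRes) (use per perEE in \<open>auto intro: perx_jn perx_cmp\<close>)
qed

lemma fwd_dir:
  assumes ext: "extremal e \<mu> Tf u \<rho> s B"
  shows "\<forall>t\<in>{0..Tf}. \<forall>x. \<rho> t x *\<^sub>R vdt u t x + \<rho> t x *\<^sub>R adv (u t) (u t) x + grad (pressure e \<rho> s t) x
         + cross3 (B t x) (curl (B t) x) = visc \<mu> (u t) x"
proof (rule ccontr)
  assume "\<not> ?thesis"
  then obtain t0 x0 where t0: "t0 \<in> {0..Tf}" and ne: "\<rho> t0 x0 *\<^sub>R vdt u t0 x0 + \<rho> t0 x0 *\<^sub>R adv (u t0) (u t0) x0
     + grad (pressure e \<rho> s t0) x0 + cross3 (B t0 x0) (curl (B t0) x0) \<noteq> visc \<mu> (u t0) x0" by blast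
  then obtain i0 where ne_i: "ResM i0 (t0, x0) \<noteq> 0"
    unfolding ResM_def vec_eq_iff by auto
  define F where "F = ResM i0"
  have sF: "smooth_fn F" and pF: "perx F" unfolding F_def by (rule sResM, rule pResM)
  define r00 where "r00 = F (t0, x0)"
  have r00: "r00 \<noteq> 0" using ne_i by (simp add: r00_def F_def)
  obtain \<delta> where \<delta>: "\<delta> > 0" and h\<delta>: "\<And>q. dist q (t0, x0) < \<delta> \<Longrightarrow> 0 < F q * r00"
  proof -
    have "isCont (\<lambda>q. F q * r00) (t0, x0)" using smooth_contat[OF sF] by (intro continuous_intros) auto
    moreover have "0 < F (t0, x0) * r00" using r00 unfolding r00_def by (auto simp: zero_less_mult_iff linorder_neq_iff)
    ultimately show ?thesis using pos_nbhd that by blast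
  qed
  define \<theta> where "\<theta> = min 1 (\<delta> / (2 * Tf))"
  have th: "0 < \<theta>" "\<theta> \<le> 1" "\<theta> * Tf \<le> \<delta> / 2"
    using \<delta> Tf by (auto simp: \<theta>_def min_def field_simps)
  define t1 where "t1 = (1 - \<theta>) * t0 + \<theta> * (Tf / 2)"
  have t1: "0 < t1" "t1 < Tf"
  proof -
    have "0 \<le> (1 - \<theta>) * t0" using th t0 by simp
    moreover have "(1 - \<theta>) * t0 \<le> (1 - \<theta>) * Tf" using th t0 by (intro mult_left_mono) auto
    moreover have "0 < \<theta> * Tf" using th Tf by simp
    ultimately show "0 < t1" "t1 < Tf" unfolding t1_def by (simp_all add: algebra_simps)
  qed
  have dt: "\<bar>t1 - t0\<bar> < \<delta>"
  proof -
    have "t1 - t0 = \<theta> * (Tf / 2 - t0)" by (simp add: t1_def algebra_simps)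
    moreover have "\<bar>Tf / 2 - t0\<bar> \<le> Tf / 2" using t0 unfolding abs_le_iff by auto
    ultimately have "\<bar>t1 - t0\<bar> \<le> \<theta> * (Tf / 2)" using th by (simp add: abs_mult mult_left_mono)
    then show ?thesis using th \<delta> by linarith
  qed
  have Ft1: "0 < F (t1, x0) * r00"
    by (rule h\<delta>) (use dt in \<open>simp add: dist_Pair_Pair dist_real_def\<close>)
  define c :: "real^3" where "c = (\<chi> j. x0 $ j - of_int \<lfloor>x0 $ j\<rfloor>)"
  have x0c: "x0 = c + (\<chi> j. of_int \<lfloor>x0 $ j\<rfloor>)" by (simp add: c_def vec_eq_iff)
  have Fc: "F (t1, x0) = F (t1, c)" using perx_vec[OF pF, of t1 c "\<lambda>j. \<lfloor>x0 $ j\<rfloor>"] x0c by simp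
  define r0 where "r0 = F (t1, c)"
  have r0: "r0 \<noteq> 0" using Ft1 Fc by (auto simp: r0_def)
  have c_cell: "c \<in> cell"
    unfolding cell_def mem_box_cart c_def by (simp add: frac_lt_1[unfolded frac_def] less_imp_le)
  obtain \<epsilon> where \<epsilon>: "\<epsilon> > 0" and h\<epsilon>: "\<And>q. dist q (t1, c) < \<epsilon> \<Longrightarrow> 0 < F q * r0"
  proof -
    have "isCont (\<lambda>q. F q * r0) (t1, c)" using smooth_contat[OF sF] by (intro continuous_intros) auto
    moreover have "0 < F (t1, c) * r0" using r0 unfolding r0_def by (auto simp: zero_less_mult_iff linorder_neq_iff)
    ultimately show ?thesis using pos_nbhd that by blast
  qed
  define \<eta> where "\<eta> = min (min (\<epsilon> / 4) (1 / 4)) (min t1 (Tf - t1))"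
  have eta: "0 < \<eta>" "\<eta> \<le> 1/4" "\<eta> \<le> \<epsilon> / 4" "\<eta> \<le> t1" "\<eta> \<le> Tf - t1"
    using \<epsilon> t1 unfolding \<eta>_def by (auto simp: min_def)
  define ph where "ph = phi t1 \<eta> c"
  define v :: vfield where "v = (\<lambda>t x. (r0 * ph (t, x)) *\<^sub>R axis i0 1)"
  have cmpv: "(\<lambda>p. v (fst p) (snd p) $ i) = (\<lambda>p. r0 * ph p * (if i = i0 then 1 else 0))" for i
    by (simp add: v_def axis_def)
  have sv: "smooth_vf v"
    unfolding smooth_vf_def cmpv ph_def by (intro allI smooth_mult smooth_const smooth_phi)
  have pv: "\<forall>t. periodic3 (v t)"
    by (simp add: periodic3_def v_def ph_def phi_per)
  have vanish: "\<forall>x. v 0 x = 0 \<and> v Tf x = 0"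
    using eta by (simp add: v_def ph_def phi_time0)
  define \<delta>s where "\<delta>s = (\<lambda>t x. (- \<mu> * frob (u t) (v t) x) / dl_ds e (\<rho> t x) (s t x) - dvg (\<lambda>y. s t y *\<^sub>R v t y) x)"
  have constr: "\<forall>t\<in>{0..Tf}. \<forall>x. dl_ds e (\<rho> t x) (s t x) * (\<delta>s t x + dvg (\<lambda>y. s t y *\<^sub>R v t y) x) = - \<mu> * frob (u t) (v t) x"
    using nz by (simp add: \<delta>s_def)
  have D0: "((\<lambda>\<epsilon>. action e Tf (\<lambda>t x. u t x + \<epsilon> *\<^sub>R (vdt v t x + lie (u t) (v t) x))
             (\<lambda>t x. \<rho> t x + \<epsilon> * - dvg (\<lambda>y. \<rho> t y *\<^sub>R v t y) x) (\<lambda>t x. s t x + \<epsilon> * \<delta>s t x)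
             (\<lambda>t x. B t x + \<epsilon> *\<^sub>R - curl (\<lambda>y. cross3 (B t y) (v t y)) x))
         has_real_derivative 0) (at 0)"
    using ext sv pv vanish constr unfolding extremal_def Let_def by blast
  have mv: "mhdv e \<mu> Tf u B \<rho> s v" by unfold_locales (use sv pv in auto)
  interpret mhdv e \<mu> Tf u B \<rho> s v by (rule mv)
  note D1 = deriv_action[OF vanish constr]
  have I0: "integral (K Tf) (\<lambda>p. \<Sum>i\<in>UNIV. Res i p * cmp v i p) = 0"
    using DERIV_unique[OF D0 D1] by simp
  define h where "h p = F p * (r0 * ph p)" for p
  have sumeq: "(\<Sum>i\<in>UNIV. Res i p * cmp v i p) = h p" for p
  proof -
    have cv: "cmp v i p = (if i = i0 then r0 * ph p else 0)" for i
      by (cases p) (simp add: v_def axis_def cmp_def)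
    have "(\<Sum>i\<in>UNIV. Res i p * cmp v i p) = (\<Sum>i\<in>UNIV. if i = i0 then Res i p * (r0 * ph p) else 0)"
      by (rule sum.cong) (auto simp: cv)
    also have "\<dots> = Res i0 p * (r0 * ph p)" by (simp add: sum.delta)
    also have "Res i0 p = F p" using ResM_Res[OF mv, of i0] by (simp add: F_def)
    finally show ?thesis by (simp add: h_def)
  qed
  have sh: "smooth_fn h" unfolding h_def[abs_def] ph_def
    by (intro smooth_mult sF smooth_const smooth_phi)
  have I1: "integral (K Tf) h = 0" using I0 unfolding sumeq by (simp add: h_def[abs_def])
  have hint: "(h has_integral 0) (K Tf)"
    using integrable_integral[OF integrable_continuous[OF smooth_cont[OF sh]]] I1 by metis
  have hnn: "0 \<le> h q" for q
  proof -
    obtain t x where q: "q = (t, x)" by (cases q)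
    show ?thesis
    proof (cases "ph (t, x) = 0")
      case True then show ?thesis by (simp add: h_def q)
    next
      case False
      have eta1: "\<eta> < 1" using eta by simp
      have pp: "\<bar>t - t1\<bar> < \<eta>" "\<And>j. \<bar>sin (pi * (x $ j - c $ j))\<bar> < sin (pi * \<eta>)"
        using phi_pos[OF eta(1) eta1 False[unfolded ph_def]] by auto
      have "\<forall>j. \<exists>k::int. \<bar>(x $ j - c $ j) - of_int k\<bar> < \<eta>"
        using sin_near_int[OF eta(1) _ pp(2)] eta by auto
      then obtain k where hk: "\<And>j. \<bar>(x $ j - c $ j) - of_int (k j)\<bar> < \<eta>" by metis
      define x' where "x' = x - (\<chi> j. of_int (k j))"
      have xx: "x = x' + (\<chi> j. of_int (k j))" by (simp add: x'_def)
      have Fx: "F (t, x) = F (t, x')" using perx_vec[OF pF, of t x' k] xx by simp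
      have "dist (t, x') (t1, c) \<le> \<bar>t - t1\<bar> + (\<Sum>j\<in>UNIV. \<bar>x' $ j - c $ j\<bar>)"
        using dist_pt_le[of "(t, x')" "(t1, c)"] by simp
      also have "\<dots> < \<eta> + (\<eta> + \<eta> + \<eta>)"
      proof -
        have "\<bar>x' $ j - c $ j\<bar> < \<eta>" for j using hk[of j] by (simp add: x'_def algebra_simps)
        then have "\<bar>x' $ 1 - c $ 1\<bar> < \<eta>" "\<bar>x' $ 2 - c $ 2\<bar> < \<eta>" "\<bar>x' $ 3 - c $ 3\<bar> < \<eta>" by auto
        then show ?thesis using pp(1) by (simp only: sum_3)
      qed
      also have "\<dots> \<le> \<epsilon>" using eta by simp
      finally have "0 < F (t, x') * r0" by (rule h\<epsilon>)
      then have "0 < F (t, x) * r0" using Fx by simp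
      moreover have "0 \<le> ph (t, x)" by (simp add: ph_def phi_nonneg)
      ultimately have "0 \<le> (F (t, x) * r0) * ph (t, x)" by simp
      then show ?thesis by (simp add: h_def q mult.assoc)
    qed
  qed
  have box: "box (0, 0) (Tf, one3) \<noteq> {}"
  proof -
    have "(Tf / 2, (\<chi> j. 1/2)) \<in> box (0, 0) (Tf, one3)"
      using Tf by (simp add: box_ne_empty mem_box Basis_prod_def Basis_vec_def inner_axis)
    then show ?thesis by blast
  qed
  have mem: "(t1, c) \<in> K Tf"
    using t1 c_cell by (simp add: cbox_Pair_eq cell_def)
  have "h (t1, c) = 0"
    by (rule has_integral_0_cbox_imp_0[OF smooth_cont[OF sh] _ hint box mem]) (use hnn in auto)
  moreover have "h (t1, c) > 0"
  proof -
    have "0 < r0 * r0" using r0 by (auto simp: zero_less_mult_iff linorder_neq_iff)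
    moreover have "0 < ph (t1, c)" by (simp add: ph_def phi_center)
    ultimately have "0 < (r0 * r0) * ph (t1, c)" by (rule mult_pos_pos)
    then show ?thesis by (simp add: h_def r0_def[symmetric] mult.assoc)
  qed
  ultimately show False by simp
qed

end

theorem theorem1:
  fixes e :: "real \<Rightarrow> real \<Rightarrow> real" and \<mu> Tf :: real
    and u B :: vfield and \<rho> s :: sfield
  assumes "\<mu> \<ge> 0" and "Tf > 0"
    and "smooth_fn (\<lambda>p::real \<times> real. e (fst p) (snd p))"
    and "smooth_vf u" and "smooth_sf \<rho>" and "smooth_sf s" and "smooth_vf B"
    and "\<forall>t. periodic3 (u t) \<and> periodic3 (\<rho> t) \<and> periodic3 (s t) \<and> periodic3 (B t)"
    and "\<forall>t\<in>{0..Tf}. \<forall>x. dl_ds e (\<rho> t x) (s t x) \<noteq> 0"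
    and "\<forall>t\<in>{0..Tf}. \<forall>x. sdt \<rho> t x + dvg (\<lambda>y. \<rho> t y *\<^sub>R u t y) x = 0"
  shows "extremal e \<mu> Tf u \<rho> s B \<longleftrightarrow>
    (\<forall>t\<in>{0..Tf}. \<forall>x.
       \<rho> t x *\<^sub>R vdt u t x + \<rho> t x *\<^sub>R adv (u t) (u t) x + grad (pressure e \<rho> s t) x
         + cross3 (B t x) (curl (B t) x)
       = visc \<mu> (u t) x)"
proof -
  have se: "smooth_fn (e2of e)" using assms(3) by (simp add: e2of_def[abs_def])
  interpret mhd e \<mu> Tf u B \<rho> s
    by unfold_locales (use assms se in auto)
  show ?thesis using fwd_dir rev_dir by blast
qed


end
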